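(* Let $E$ be a Borel space and $Q$ a semi-Markov kernel on $\mathbb{R}_+\times E$ given $E$ satisfying the regularity condition: there exist $\delta>0$ and $\epsilon>0$ such that $Q(\delta,E\mid x)\le 1-\epsilon$ for all $x\in E$. Let $c,g:E\to[0,\infty)$ be measurable, fix $T\in\mathbb{R}_+$, and let $V^*$ be the optimal stopping value function described in the context. Define $V^*_0\equiv 0$ on $[0,T]\times E$ and $V^*_{n+1}=\mathbb{G}V^*_n$ for $n\ge 0$. Then $V^*(s,x)=\lim_{n\to\infty}V^*_n(s,x)$ for all $(s,x)\in[0,T]\times E$, and moreover $V^*=\mathbb{G}V^*$ on $[0,T]\times E$.
   Context: Semi-Markov kernel: for each $B\in\mathcal{B}(E)$ and $x\in E$, $t\mapsto Q(t,B\mid x)$ is nondecreasing, right-continuous on $\mathbb{R}_+$ with $Q(0,B\mid x)=0$; for each $t$, $Q(t,\cdot\mid\cdot)$ is a substochastic kernel on $E$; $\lim_{t\to\infty}Q(t,\cdot\mid\cdot)$ is a stochastic kernel on $E$. Let $\Omega=\{(x_0,t_1,x_1,t_2,x_2,\dots): x_0\in E,\ (t_n,x_n)\in\mathbb{R}_+\times E\}$ with its product Borel $\sigma$-algebra; $X_n(\omega)=x_n$, $T_0=0$, $T_{n+1}(\omega)=t_{n+1}$, $S_n=\sum_{k=0}^n T_k$, $Y_n=(X_0,T_1,X_1,\dots,T_n,X_n)$, $\mathcal{F}_n=\sigma(T_0,X_0,\dots,T_n,X_n)$. For $x\in E$, $\mathbb{P}_x$ is the unique probability measure on $\Omega$ with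 $\mathbb{P}_x(T_0=0,X_0=x)=1$ and $\mathbb{P}_x(T_{n+1}\le t,X_{n+1}\in B\mid Y_n)=Q(t,B\mid X_n)$; $\mathbb{E}_x$ is its expectation. The process $X(t)=X_n$ for $S_n\le t<S_{n+1}$. A stopping time is a map $\tau:\Omega\to\mathbb{N}\cup\{+\infty\}$ ($\mathbb{N}=\{0,1,2,\dots\}$) with $\{\tau=n\}\in\mathcal{F}_n$ for all $n\in\mathbb{N}$; $\Gamma$ is the set of stopping times. For a horizon $s\in\mathbb{R}_+$ and $\tau\in\Gamma$, $R^s_\tau=\int_0^{S_\tau}c(X(t))\,dt+g(X(S_\tau))$ if $S_\tau<s$ and $R^s_\tau=\int_0^s c(X(t))\,dt$ if $S_\tau\ge s$ (with $S_\tau=\lim_n S_n$ on $\{\tau=\infty\}$); $V^\tau(s,x)=\mathbb{E}_x[R^s_\tau]$ and $V^*(s,x)=\inf_{\tau\in\Gamma}V^\tau(s,x)$. For a Borel function $u:[0,T]\times E\to[0,\infty]$, $\mathbb{G}u(s,x)=\min\Big\{c(x)\int_0^s(1-Q(t,E\mid x))\,dt+\int_E\int_{[0,s]}u(s-t,y)\,Q(dt,dy\mid x),\ g(x)\Big\}$. *)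

theory Defs
  imports "HOL-Probability.Probability"
begin

definition subprob_kernel :: "'e measure \<Rightarrow> ('e set \<Rightarrow> 'e \<Rightarrow> real) \<Rightarrow> bool" where
  "subprob_kernel M K \<longleftrightarrow>
     (\<forall>x\<in>space M. \<exists>\<mu>. subprob_space \<mu> \<and> sets \<mu> = sets M \<and> (\<forall>B\<in>sets M. K B x = measure \<mu> B)) \<and>
     (\<forall>B\<in>sets M. (\<lambda>x. K B x) \<in> borel_measurable M)"

definition prob_kernel :: "'e measure \<Rightarrow> ('e set \<Rightarrow> 'e \<Rightarrow> real) \<Rightarrow> bool" where
  "prob_kernel M K \<longleftrightarrow>
     (\<forall>x\<in>space M. \<exists>\<mu>. prob_space \<mu> \<and> sets \<mu> = sets M \<and> (\<forall>B\<in>sets M. K B x = measure \<mu> B)) \<and>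
     (\<forall>B\<in>sets M. (\<lambda>x. K B x) \<in> borel_measurable M)"

text \<open>Semi-Markov kernel: Q t B x stands for Q(t,B|x); only t \<ge> 0 is relevant.\<close>
definition semi_markov_kernel :: "'e measure \<Rightarrow> (real \<Rightarrow> 'e set \<Rightarrow> 'e \<Rightarrow> real) \<Rightarrow> bool" where
  "semi_markov_kernel M Q \<longleftrightarrow>
     (\<forall>B\<in>sets M. \<forall>x\<in>space M.
        mono_on {0..} (\<lambda>t. Q t B x) \<and>
        (\<forall>t\<ge>0. continuous (at_right t) (\<lambda>t. Q t B x)) \<and>
        Q 0 B x = 0) \<and>
     (\<forall>t\<ge>0. subprob_kernel M (Q t)) \<and>
     (\<exists>Qi. (\<forall>B\<in>sets M. \<forall>x\<in>space M. ((\<lambda>t. Q t B x) \<longlongrightarrow> Qi B x) at_top) \<and> prob_kernel M Qi)"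

text \<open>The measure Q(dt,dy|x) on R x E determined by Q(t,B|x) (no mass on negative times).\<close>
definition Qmeas :: "'e measure \<Rightarrow> (real \<Rightarrow> 'e set \<Rightarrow> 'e \<Rightarrow> real) \<Rightarrow> 'e \<Rightarrow> (real \<times> 'e) measure" where
  "Qmeas M Q x = (THE \<mu>. sets \<mu> = sets (borel \<Otimes>\<^sub>M M) \<and> finite_measure \<mu> \<and>
      (\<forall>t. \<forall>B\<in>sets M. emeasure \<mu> ({..t} \<times> B) = ennreal (if t < 0 then 0 else Q t B x)))"

text \<open>omega n = (t_n, x_n); coordinate 0 is (T_0, X_0).\<close>
definition path_space :: "'e measure \<Rightarrow> (nat \<Rightarrow> real \<times> 'e) measure" where
  "path_space M = PiM UNIV (\<lambda>_. borel \<Otimes>\<^sub>M M)"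

definition Tn :: "nat \<Rightarrow> (nat \<Rightarrow> real \<times> 'e) \<Rightarrow> real" where
  "Tn n \<omega> = fst (\<omega> n)"

definition Xn :: "nat \<Rightarrow> (nat \<Rightarrow> real \<times> 'e) \<Rightarrow> 'e" where
  "Xn n \<omega> = snd (\<omega> n)"

definition Sn :: "nat \<Rightarrow> (nat \<Rightarrow> real \<times> 'e) \<Rightarrow> real" where
  "Sn n \<omega> = (\<Sum>k\<le>n. Tn k \<omega>)"

definition Fn :: "'e measure \<Rightarrow> nat \<Rightarrow> (nat \<Rightarrow> real \<times> 'e) measure" where
  "Fn M n = vimage_algebra (space (path_space M)) (\<lambda>\<omega>. restrict \<omega> {..n}) (PiM {..n} (\<lambda>_. borel \<Otimes>\<^sub>M M))"

definition stopping_times :: "'e measure \<Rightarrow> ((nat \<Rightarrow> real \<times> 'e) \<Rightarrow> enat) set" where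
  "stopping_times M = {\<tau>. \<forall>n. {\<omega>\<in>space (path_space M). \<tau> \<omega> = enat n} \<in> sets (Fn M n)}"

text \<open>S_tau, with S_infinity = lim S_n (= sup, the T_k being nonnegative).\<close>
definition S_tau :: "((nat \<Rightarrow> real \<times> 'e) \<Rightarrow> enat) \<Rightarrow> (nat \<Rightarrow> real \<times> 'e) \<Rightarrow> ereal" where
  "S_tau \<tau> \<omega> = (case \<tau> \<omega> of enat n \<Rightarrow> ereal (Sn n \<omega>) | \<infinity> \<Rightarrow> (SUP n. ereal (Sn n \<omega>)))"

definition Xproc :: "(nat \<Rightarrow> real \<times> 'e) \<Rightarrow> real \<Rightarrow> 'e" where
  "Xproc \<omega> t = Xn (LEAST n. t < Sn (Suc n) \<omega>) \<omega>"

definition reward :: "('e \<Rightarrow> real) \<Rightarrow> ('e \<Rightarrow> real) \<Rightarrow> real \<Rightarrow> ((nat \<Rightarrow> real \<times> 'e) \<Rightarrow> enat)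
    \<Rightarrow> (nat \<Rightarrow> real \<times> 'e) \<Rightarrow> ennreal" where
  "reward c g s \<tau> \<omega> =
     (if S_tau \<tau> \<omega> < ereal s
      then (\<integral>\<^sup>+ t\<in>{0..real_of_ereal (S_tau \<tau> \<omega>)}. ennreal (c (Xproc \<omega> t)) \<partial>lborel)
           + ennreal (g (Xproc \<omega> (real_of_ereal (S_tau \<tau> \<omega>))))
      else (\<integral>\<^sup>+ t\<in>{0..s}. ennreal (c (Xproc \<omega> t)) \<partial>lborel))"

definition Vtau :: "('e \<Rightarrow> (nat \<Rightarrow> real \<times> 'e) measure) \<Rightarrow> ('e \<Rightarrow> real) \<Rightarrow> ('e \<Rightarrow> real)
    \<Rightarrow> ((nat \<Rightarrow> real \<times> 'e) \<Rightarrow> enat) \<Rightarrow> real \<Rightarrow> 'e \<Rightarrow> ennreal" where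
  "Vtau P c g \<tau> s x = (\<integral>\<^sup>+ \<omega>. reward c g s \<tau> \<omega> \<partial>P x)"

definition Vstar :: "'e measure \<Rightarrow> ('e \<Rightarrow> (nat \<Rightarrow> real \<times> 'e) measure) \<Rightarrow> ('e \<Rightarrow> real) \<Rightarrow> ('e \<Rightarrow> real)
    \<Rightarrow> real \<Rightarrow> 'e \<Rightarrow> ennreal" where
  "Vstar M P c g s x = (INF \<tau>\<in>stopping_times M. Vtau P c g \<tau> s x)"

definition semi_markov_laws :: "'e measure \<Rightarrow> (real \<Rightarrow> 'e set \<Rightarrow> 'e \<Rightarrow> real)
    \<Rightarrow> ('e \<Rightarrow> (nat \<Rightarrow> real \<times> 'e) measure) \<Rightarrow> bool" where
  "semi_markov_laws M Q P \<longleftrightarrow> (\<forall>x\<in>space M.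
     prob_space (P x) \<and> sets (P x) = sets (path_space M) \<and>
     (AE \<omega> in P x. \<omega> 0 = (0, x)) \<and>
     (\<forall>n. \<forall>A\<in>sets (Fn M n). \<forall>t\<ge>0. \<forall>B\<in>sets M.
        emeasure (P x) (A \<inter> {\<omega>\<in>space (path_space M). Tn (Suc n) \<omega> \<le> t \<and> Xn (Suc n) \<omega> \<in> B})
        = (\<integral>\<^sup>+ \<omega>\<in>A. ennreal (Q t B (Xn n \<omega>)) \<partial>P x)))"

definition Gop :: "'e measure \<Rightarrow> (real \<Rightarrow> 'e set \<Rightarrow> 'e \<Rightarrow> real) \<Rightarrow> ('e \<Rightarrow> real) \<Rightarrow> ('e \<Rightarrow> real)
    \<Rightarrow> (real \<Rightarrow> 'e \<Rightarrow> ennreal) \<Rightarrow> real \<Rightarrow> 'e \<Rightarrow> ennreal" where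
  "Gop M Q c g u s x =
     min (ennreal (c x) * (\<integral>\<^sup>+ t\<in>{0..s}. ennreal (1 - Q t (space M) x) \<partial>lborel)
          + (\<integral>\<^sup>+ p. indicator {0..s} (fst p) * u (s - fst p) (snd p) \<partial>Qmeas M Q x))
         (ennreal (g x))"

definition Vn :: "'e measure \<Rightarrow> (real \<Rightarrow> 'e set \<Rightarrow> 'e \<Rightarrow> real) \<Rightarrow> ('e \<Rightarrow> real) \<Rightarrow> ('e \<Rightarrow> real)
    \<Rightarrow> nat \<Rightarrow> real \<Rightarrow> 'e \<Rightarrow> ennreal" where
  "Vn M Q c g n = (Gop M Q c g ^^ n) (\<lambda>_ _. 0)"

end

theory Submission
  imports Defs
begin


locale smk =
  fixes M :: "'e measure" and Q :: "real \<Rightarrow> 'e set \<Rightarrow> 'e \<Rightarrow> real"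
    and P :: "'e \<Rightarrow> (nat \<Rightarrow> real \<times> 'e) measure" and c g :: "'e \<Rightarrow> real"
  assumes Qk: "semi_markov_kernel M Q"
    and Pl: "semi_markov_laws M Q P"
    and reg: "\<exists>\<delta>>0. \<exists>\<epsilon>>0. \<forall>x\<in>space M. Q \<delta> (space M) x \<le> 1 - \<epsilon>"
    and c_meas[measurable]: "c \<in> borel_measurable M" and c_nn: "\<forall>x\<in>space M. 0 \<le> c x"
    and g_meas[measurable]: "g \<in> borel_measurable M" and g_nn: "\<forall>x\<in>space M. 0 \<le> g x"
begin

abbreviation "\<Omega> \<equiv> space (path_space M)"
abbreviation "N \<equiv> (borel \<Otimes>\<^sub>M M :: (real \<times> 'e) measure)"

lemma space_Om: "\<Omega> = (UNIV \<rightarrow>\<^sub>E (UNIV \<times> space M))"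
  by (simp add: path_space_def space_PiM space_pair_measure)

lemma space_N: "space N = UNIV \<times> space M"
  by (simp add: space_pair_measure)

lemma Om_comp: "\<omega> \<in> \<Omega> \<Longrightarrow> \<omega> j \<in> UNIV \<times> space M"
  unfolding space_Om by auto

lemma Om_X: "\<omega> \<in> \<Omega> \<Longrightarrow> Xn j \<omega> \<in> space M"
  using Om_comp[of \<omega> j] by (auto simp: Xn_def)

lemma comp_meas_path[measurable]: "(\<lambda>\<omega>. \<omega> j) \<in> measurable (path_space M) N"
  unfolding path_space_def by (rule measurable_component_singleton) simp

lemma Fn_space[simp]: "space (Fn M n) = \<Omega>"
  by (simp add: Fn_def)

lemma restr_in: "(\<lambda>\<omega>. restrict \<omega> {..n}) \<in> \<Omega> \<rightarrow> space (Pi\<^sub>M {..n} (\<lambda>_. N))"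
  unfolding space_Om by (force simp: space_PiM space_pair_measure PiE_iff)

lemma Fn_comp_meas: 
  assumes "j \<le> n" shows "(\<lambda>\<omega>. \<omega> j) \<in> measurable (Fn M n) N"
proof -
  have "(\<lambda>\<omega>. (restrict \<omega> {..n}) j) \<in> measurable (Fn M n) N"
    unfolding Fn_def
    by (rule measurable_compose[OF measurable_vimage_algebra1[OF restr_in]])
       (rule measurable_component_singleton, simp add: assms)
  then show ?thesis using assms by simp
qed

lemma Fn_sub: "sets (Fn M n) \<subseteq> sets (path_space M)"
  unfolding Fn_def
  by (rule sets_image_in_sets) (auto simp: path_space_def intro!: measurable_restrict_subset)

lemma Fn_mono: assumes "j \<le> n" shows "sets (Fn M j) \<subseteq> sets (Fn M n)"
proof -
  have "(\<lambda>\<omega>. restrict \<omega> {..j}) \<in> measurable (Fn M n) (Pi\<^sub>M {..j} (\<lambda>_. N))"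
    by (rule measurable_restrict) (rule Fn_comp_meas, use assms in auto)
  then show ?thesis unfolding Fn_def[of M j]
    by (intro sets_image_in_sets) auto
qed

lemma Fn_meas_path: "f \<in> measurable (Fn M n) K \<Longrightarrow> f \<in> measurable (path_space M) K"
  by (rule measurable_from_subalg[OF _ ]) (auto simp: subalgebra_def Fn_sub)

lemma Q_kernel: "t \<ge> 0 \<Longrightarrow> subprob_kernel M (Q t)"
  using Qk unfolding semi_markov_kernel_def by auto

lemma Q_meas[measurable]: "t \<ge> 0 \<Longrightarrow> B \<in> sets M \<Longrightarrow> (\<lambda>x. Q t B x) \<in> borel_measurable M"
  using Q_kernel unfolding subprob_kernel_def by auto

lemma Q_bounds:
  assumes "t \<ge> 0" "B \<in> sets M" "x \<in> space M"
  shows "0 \<le> Q t B x" "Q t B x \<le> Q t (space M) x" "Q t (space M) x \<le> 1"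
proof -
  obtain \<mu> where mu: "subprob_space \<mu>" "sets \<mu> = sets M" "\<forall>B\<in>sets M. Q t B x = measure \<mu> B"
    using Q_kernel[OF assms(1)] assms(3) unfolding subprob_kernel_def by blast
  interpret subprob_space \<mu> by (fact mu)
  have sp: "space \<mu> = space M" using mu(2) by (rule sets_eq_imp_space_eq)
  show "0 \<le> Q t B x" using mu assms by auto
  show "Q t B x \<le> Q t (space M) x" using mu assms sp
    by (auto intro!: finite_measure_mono sets.sets_into_space)
  show "Q t (space M) x \<le> 1" using mu sp by (auto simp: subprob_measure_le_1)
qed

lemma Q0: "B \<in> sets M \<Longrightarrow> x \<in> space M \<Longrightarrow> Q 0 B x = 0"
  using Qk unfolding semi_markov_kernel_def by auto

lemma Q_mono: "B \<in> sets M \<Longrightarrow> x \<in> space M \<Longrightarrow> 0 \<le> s \<Longrightarrow> s \<le> t \<Longrightarrow> Q s B x \<le> Q t B x"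
  using Qk unfolding semi_markov_kernel_def mono_on_def by auto

lemma P_prob: "x \<in> space M \<Longrightarrow> prob_space (P x)"
  using Pl unfolding semi_markov_laws_def by auto

lemma P_sets: "x \<in> space M \<Longrightarrow> sets (P x) = sets (path_space M)"
  using Pl unfolding semi_markov_laws_def by auto

lemma P_space: "x \<in> space M \<Longrightarrow> space (P x) = \<Omega>"
  using P_sets by (rule sets_eq_imp_space_eq)

lemma P_init: "x \<in> space M \<Longrightarrow> AE \<omega> in P x. \<omega> 0 = (0, x)"
  using Pl unfolding semi_markov_laws_def by auto

lemma P_trans: "x \<in> space M \<Longrightarrow> A \<in> sets (Fn M n) \<Longrightarrow> t \<ge> 0 \<Longrightarrow> B \<in> sets M \<Longrightarrow>
  emeasure (P x) (A \<inter> {\<omega>\<in>\<Omega>. Tn (Suc n) \<omega> \<le> t \<and> Xn (Suc n) \<omega> \<in> B})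
        = (\<integral>\<^sup>+ \<omega>\<in>A. ennreal (Q t B (Xn n \<omega>)) \<partial>P x)"
  using Pl unfolding semi_markov_laws_def by auto

end


context smk begin

definition "Gen = {{..(t::real)} \<times> B | t B. B \<in> sets M}"

lemma Gen_Int_aux: "{..(t::real)} \<times> B \<inter> {..t'} \<times> B' = {..min t t'} \<times> (B \<inter> B')"
  by auto

lemma Gen_Int_stable: "Int_stable Gen"
  unfolding Int_stable_def Gen_def
  apply (auto simp: Gen_Int_aux)
  apply (intro exI conjI)
   apply (rule refl)
  apply auto
  done

lemma Gen_Pow: "Gen \<subseteq> Pow (UNIV \<times> space M)"
  unfolding Gen_def using sets.sets_into_space by fastforce

lemma sets_N_gen: "sets N = sigma_sets (UNIV \<times> space M) Gen"
proof -
  have "sets N = sets (sigma UNIV (range (\<lambda>a::real. {..a})) \<Otimes>\<^sub>M sigma (space M) (sets M))"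
    by (rule sets_pair_measure_cong) (simp_all add: borel_eq_atMost)
  also have "\<dots> = sets (sigma (UNIV \<times> space M) {a \<times> b | a b. a \<in> range (\<lambda>a::real. {..a}) \<and> b \<in> sets M})"
  proof (rule arg_cong[where f=sets], rule sigma_prod)
    show "\<exists>E\<subseteq>range (\<lambda>a::real. {..a}). countable E \<and> UNIV = \<Union> E"
      by (rule exI[of _ "range (\<lambda>n::nat. {..real n})"]) (auto intro: real_arch_simple)
    show "\<exists>E\<subseteq>sets M. countable E \<and> space M = \<Union> E"
      by (rule exI[of _ "{space M}"]) auto
  qed (auto dest: sets.sets_into_space)
  also have "\<dots> = sigma_sets (UNIV \<times> space M) {a \<times> b | a b. a \<in> range (\<lambda>a::real. {..a}) \<and> b \<in> sets M}"
    by (rule sets_measure_of) (auto dest: sets.sets_into_space)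
  also have "{a \<times> b | a b. a \<in> range (\<lambda>a::real. {..a}) \<and> b \<in> sets M} = Gen"
    by (auto simp: Gen_def)
  finally show ?thesis .
qed

lemma Tn_meas[measurable]: "Tn j \<in> borel_measurable (path_space M)"
  unfolding Tn_def by measurable

lemma Xn_meas[measurable]: "Xn j \<in> measurable (path_space M) M"
  unfolding Xn_def by measurable

lemma Tn_meas_F: "j \<le> n \<Longrightarrow> Tn j \<in> borel_measurable (Fn M n)"
  unfolding Tn_def by (rule measurable_compose[OF Fn_comp_meas]) auto

lemma Xn_meas_F: "j \<le> n \<Longrightarrow> Xn j \<in> measurable (Fn M n) M"
  unfolding Xn_def by (rule measurable_compose[OF Fn_comp_meas]) auto

lemma T_pos_null:
  assumes x: "x \<in> space M"
  shows "emeasure (P x) {\<omega>\<in>\<Omega>. Tn (Suc j) \<omega> \<le> 0} = 0"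
proof -
  interpret prob_space "P x" by (rule P_prob[OF x])
  have sub: "{\<omega>\<in>\<Omega>. Tn (Suc j) \<omega> \<le> 0} \<subseteq> \<Omega> \<inter> {\<omega>\<in>\<Omega>. Tn (Suc j) \<omega> \<le> 0 \<and> Xn (Suc j) \<omega> \<in> space M}"
    using Om_X by auto
  have "emeasure (P x) (\<Omega> \<inter> {\<omega>\<in>\<Omega>. Tn (Suc j) \<omega> \<le> 0 \<and> Xn (Suc j) \<omega> \<in> space M})
      = (\<integral>\<^sup>+ \<omega>\<in>\<Omega>. ennreal (Q 0 (space M) (Xn j \<omega>)) \<partial>P x)"
    by (rule P_trans[OF x]) (auto intro: sets.top[of "Fn M j", simplified])
  also have "\<dots> = 0"
    by (rule nn_integral_zero') (auto intro!: AE_I2 simp: Q0 Om_X indicator_def)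
  finally have z: "emeasure (P x) (\<Omega> \<inter> {\<omega>\<in>\<Omega>. Tn (Suc j) \<omega> \<le> 0 \<and> Xn (Suc j) \<omega> \<in> space M}) = 0" .
  have "emeasure (P x) {\<omega>\<in>\<Omega>. Tn (Suc j) \<omega> \<le> 0} \<le> emeasure (P x) (\<Omega> \<inter> {\<omega>\<in>\<Omega>. Tn (Suc j) \<omega> \<le> 0 \<and> Xn (Suc j) \<omega> \<in> space M})"
    by (rule emeasure_mono[OF sub]) (simp add: P_sets[OF x])
  then show ?thesis using z by simp
qed

end


context smk begin

lemma P_meas: "y \<in> space M \<Longrightarrow> f \<in> measurable (path_space M) K \<Longrightarrow> f \<in> measurable (P y) K"
  using measurable_cong_sets[OF P_sets refl] by blast

definition "mu y = distr (P y) N (\<lambda>\<omega>. \<omega> 1)"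

lemma mu_sets: "sets (mu y) = sets N" by (simp add: mu_def)

lemma mu_prob: "y \<in> space M \<Longrightarrow> prob_space (mu y)"
  unfolding mu_def
  by (rule prob_space.prob_space_distr[OF P_prob]) (auto intro!: P_meas)

lemma mu_gen:
  assumes y: "y \<in> space M" and B: "B \<in> sets M"
  shows "emeasure (mu y) ({..t}\<times>B) = ennreal (if t < 0 then 0 else Q t B y)"
proof -
  interpret prob_space "P y" by (rule P_prob[OF y])
  have meas: "(\<lambda>\<omega>. \<omega> 1) \<in> measurable (P y) N"
    by (rule P_meas[OF y]) simp
  have "emeasure (mu y) ({..t}\<times>B) = emeasure (P y) ((\<lambda>\<omega>. \<omega> 1) -` ({..t}\<times>B) \<inter> \<Omega>)"
    unfolding mu_def using B by (subst emeasure_distr[OF meas]) (auto simp: P_space[OF y])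
  also have "(\<lambda>\<omega>. \<omega> 1) -` ({..t}\<times>B) \<inter> \<Omega> = \<Omega> \<inter> {\<omega>\<in>\<Omega>. Tn (Suc 0) \<omega> \<le> t \<and> Xn (Suc 0) \<omega> \<in> B}"
    by (auto simp: Tn_def Xn_def mem_Times_iff)
  finally have eq: "emeasure (mu y) ({..t}\<times>B) = emeasure (P y) (\<Omega> \<inter> {\<omega>\<in>\<Omega>. Tn (Suc 0) \<omega> \<le> t \<and> Xn (Suc 0) \<omega> \<in> B})" .
  show ?thesis
  proof (cases "t < 0")
    case True
    have "emeasure (P y) (\<Omega> \<inter> {\<omega>\<in>\<Omega>. Tn (Suc 0) \<omega> \<le> t \<and> Xn (Suc 0) \<omega> \<in> B}) \<le> emeasure (P y) {\<omega>\<in>\<Omega>. Tn (Suc 0) \<omega> \<le> 0}"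
      using True by (intro emeasure_mono) (auto simp: P_sets[OF y])
    then show ?thesis using eq True T_pos_null[OF y, of 0] by simp
  next
    case False
    have "emeasure (P y) (\<Omega> \<inter> {\<omega>\<in>\<Omega>. Tn (Suc 0) \<omega> \<le> t \<and> Xn (Suc 0) \<omega> \<in> B})
        = (\<integral>\<^sup>+ \<omega>\<in>\<Omega>. ennreal (Q t B (Xn 0 \<omega>)) \<partial>P y)"
      using False B by (intro P_trans[OF y]) (auto intro: sets.top[of "Fn M 0", simplified])
    also have "\<dots> = (\<integral>\<^sup>+ \<omega>. ennreal (Q t B y) \<partial>P y)"
      using P_init[OF y] by (intro nn_integral_cong_AE) (auto simp: Xn_def P_space[OF y])
    also have "\<dots> = ennreal (Q t B y)" by (simp add: emeasure_space_1)
    finally show ?thesis using eq False by simp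
  qed
qed

lemma Qmeas_eq: assumes y: "y \<in> space M" shows "Qmeas M Q y = mu y"
  unfolding Qmeas_def
proof (rule the_equality)
  interpret prob_space "mu y" by (rule mu_prob[OF y])
  show "sets (mu y) = sets N \<and> finite_measure (mu y) \<and>
    (\<forall>t. \<forall>B\<in>sets M. emeasure (mu y) ({..t} \<times> B) = ennreal (if t < 0 then 0 else Q t B y))"
    using mu_gen[OF y] mu_sets finite_measure_axioms by auto
  fix \<mu> assume A: "sets \<mu> = sets N \<and> finite_measure \<mu> \<and>
    (\<forall>t. \<forall>B\<in>sets M. emeasure \<mu> ({..t} \<times> B) = ennreal (if t < 0 then 0 else Q t B y))"
  interpret m: finite_measure \<mu> using A by simp
  show "\<mu> = mu y"
  proof (rule measure_eqI_generator_eq[OF Gen_Int_stable Gen_Pow])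
    show "\<And>X. X \<in> Gen \<Longrightarrow> emeasure \<mu> X = emeasure (mu y) X"
      using A mu_gen[OF y] by (auto simp: Gen_def)
    show "sets \<mu> = sigma_sets (UNIV \<times> space M) Gen" using A sets_N_gen by simp
    show "sets (mu y) = sigma_sets (UNIV \<times> space M) Gen" using mu_sets sets_N_gen by simp
    show "range (\<lambda>i::nat. {..real i} \<times> space M) \<subseteq> Gen" by (auto simp: Gen_def)
    show "(\<Union>i::nat. {..real i} \<times> space M) = UNIV \<times> space M"
      by (auto intro: real_arch_simple)
    show "\<And>i. emeasure \<mu> ({..real i} \<times> space M) \<noteq> \<infinity>" by simp
  qed
qed

lemma Qmeas_sets[measurable_cong]: "y \<in> space M \<Longrightarrow> sets (Qmeas M Q y) = sets N"
  by (simp add: Qmeas_eq mu_sets)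

lemma Qmeas_space: "y \<in> space M \<Longrightarrow> space (Qmeas M Q y) = UNIV \<times> space M"
  using sets_eq_imp_space_eq[OF Qmeas_sets] space_N by simp

lemma Qmeas_prob: "y \<in> space M \<Longrightarrow> prob_space (Qmeas M Q y)"
  by (simp add: Qmeas_eq mu_prob)

lemma Qmeas_gen: "y \<in> space M \<Longrightarrow> B \<in> sets M \<Longrightarrow>
   emeasure (Qmeas M Q y) ({..t}\<times>B) = ennreal (if t < 0 then 0 else Q t B y)"
  by (simp add: Qmeas_eq mu_gen)

lemma Qmeas_pos: assumes y: "y \<in> space M" shows "AE p in Qmeas M Q y. 0 < fst p"
proof -
  have meas: "(\<lambda>\<omega>. \<omega> 1) \<in> measurable (P y) N"
    by (rule P_meas[OF y]) simp
  have "AE \<omega> in P y. 0 < fst (\<omega> 1)"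
    by (rule AE_I'[of "{\<omega>\<in>\<Omega>. Tn (Suc 0) \<omega> \<le> 0}"])
       (auto simp: null_sets_def P_sets[OF y] P_space[OF y] Tn_def T_pos_null[OF y, of 0, unfolded Tn_def])
  then show ?thesis unfolding Qmeas_eq[OF y] mu_def
    by (subst AE_distr_iff[OF meas]) auto
qed

lemma Qmeas_kernel[measurable]: "(\<lambda>y. Qmeas M Q y) \<in> measurable M (subprob_algebra N)"
proof (rule measurable_subprob_algebra_generated[OF sets_N_gen Gen_Int_stable Gen_Pow])
  show "\<And>a. a \<in> space M \<Longrightarrow> subprob_space (Qmeas M Q a)"
    using Qmeas_prob prob_space_imp_subprob_space by blast
  show "\<And>a. a \<in> space M \<Longrightarrow> sets (Qmeas M Q a) = sets N" by (rule Qmeas_sets)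
  fix A assume "A \<in> Gen"
  then obtain t B where A: "A = {..t} \<times> B" "B \<in> sets M" by (auto simp: Gen_def)
  show "(\<lambda>a. emeasure (Qmeas M Q a) A) \<in> borel_measurable M"
  proof (cases "t < 0")
    case True
    then show ?thesis using A
      by (subst measurable_cong[where g="\<lambda>_. 0"]) (auto simp: Qmeas_gen)
  next
    case False
    then show ?thesis using A
      by (subst measurable_cong[where g="\<lambda>a. ennreal (Q t B a)"]) (auto simp: Qmeas_gen)
  qed
next
  show "(\<lambda>a. emeasure (Qmeas M Q a) (UNIV \<times> space M)) \<in> borel_measurable M"
    by (subst measurable_cong[where g="\<lambda>_. 1"])
       (auto simp: prob_space.emeasure_space_1[OF Qmeas_prob] Qmeas_space[symmetric])
qed

end


context smk begin

definition "Gen2 n = {A \<times> G | A G. A \<in> sets (Fn M n) \<and> G \<in> Gen}"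

lemma Gen2_Pow: "Gen2 n \<subseteq> Pow (\<Omega> \<times> (UNIV \<times> space M))"
  using Gen_Pow sets.sets_into_space[of _ "Fn M n"] unfolding Gen2_def by fastforce

lemma Gen2_Int_stable: "Int_stable (Gen2 n)"
proof (rule Int_stableI)
  fix a b assume "a \<in> Gen2 n" "b \<in> Gen2 n"
  then obtain A G A' G' where a: "a = A \<times> G" "A \<in> sets (Fn M n)" "G \<in> Gen"
    and b: "b = A' \<times> G'" "A' \<in> sets (Fn M n)" "G' \<in> Gen" unfolding Gen2_def by blast
  have "G \<inter> G' \<in> Gen" using Gen_Int_stable a b unfolding Int_stable_def by blast
  moreover have "a \<inter> b = (A \<inter> A') \<times> (G \<inter> G')" using a b by auto
  ultimately show "a \<inter> b \<in> Gen2 n" using a b unfolding Gen2_def by blast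
qed

lemma sets_FnN: "sets (Fn M n \<Otimes>\<^sub>M N) = sigma_sets (\<Omega> \<times> (UNIV \<times> space M)) (Gen2 n)"
proof -
  have "sets (Fn M n \<Otimes>\<^sub>M N) = sets (sigma \<Omega> (sets (Fn M n)) \<Otimes>\<^sub>M sigma (UNIV \<times> space M) Gen)"
  proof (rule sets_pair_measure_cong)
    show "sets (Fn M n) = sets (sigma \<Omega> (sets (Fn M n)))"
      using sets.sigma_sets_eq[of "Fn M n"] sets.space_closed[of "Fn M n"] by simp
    show "sets N = sets (sigma (UNIV \<times> space M) Gen)"
      using sets_N_gen Gen_Pow by simp
  qed
  also have "\<dots> = sets (sigma (\<Omega> \<times> (UNIV \<times> space M)) {a \<times> b | a b. a \<in> sets (Fn M n) \<and> b \<in> Gen})"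
  proof (rule arg_cong[where f=sets], rule sigma_prod)
    show "\<exists>E\<subseteq>sets (Fn M n). countable E \<and> \<Omega> = \<Union> E"
      by (rule exI[of _ "{\<Omega>}"]) (auto intro: sets.top[of "Fn M n", simplified])
    show "\<exists>E\<subseteq>Gen. countable E \<and> UNIV \<times> space M = \<Union> E"
      by (rule exI[of _ "range (\<lambda>i::nat. {..real i} \<times> space M)"]) (auto simp: Gen_def intro: real_arch_simple)
  qed (use Gen_Pow sets.space_closed[of "Fn M n"] in auto)
  also have "\<dots> = sigma_sets (\<Omega> \<times> (UNIV \<times> space M)) (Gen2 n)"
    unfolding Gen2_def by (rule sets_measure_of) (use Gen2_Pow[of n] in \<open>auto simp: Gen2_def\<close>)
  finally show ?thesis .
qed

lemma K_meas[measurable]: "(\<lambda>\<omega>. Qmeas M Q (Xn n \<omega>)) \<in> measurable (Fn M n) (subprob_algebra N)"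
  by (rule measurable_compose[OF Xn_meas_F Qmeas_kernel]) simp

lemma Kd_meas: "(\<lambda>\<omega>. distr (Qmeas M Q (Xn n \<omega>)) (Fn M n \<Otimes>\<^sub>M N) (Pair \<omega>)) \<in> measurable (Fn M n) (subprob_algebra (Fn M n \<Otimes>\<^sub>M N))"
  by (rule measurable_distr2[OF _ K_meas]) simp

lemma Kd_meas_P: "x \<in> space M \<Longrightarrow> (\<lambda>\<omega>. distr (Qmeas M Q (Xn n \<omega>)) (Fn M n \<Otimes>\<^sub>M N) (Pair \<omega>)) \<in> measurable (P x) (subprob_algebra (Fn M n \<Otimes>\<^sub>M N))"
  by (rule P_meas[OF _ Fn_meas_path[OF Kd_meas]])

lemma pair_meas_F: "(\<lambda>\<omega>. (\<omega>, \<omega> (Suc n))) \<in> measurable (P x) (Fn M n \<Otimes>\<^sub>M N)" if x: "x \<in> space M"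
proof -
  have "(\<lambda>\<omega>. \<omega>) \<in> measurable (P x) (Fn M n)"
    using x by (intro measurable_from_subalg[OF _ measurable_ident_sets[OF refl]])
       (auto simp: subalgebra_def Fn_sub P_sets P_space)
  moreover have "(\<lambda>\<omega>. \<omega> (Suc n)) \<in> measurable (P x) N" by (rule P_meas[OF x]) simp
  ultimately show ?thesis by (rule measurable_Pair)
qed

lemma nu_eq:
  assumes x: "x \<in> space M"
  shows "distr (P x) (Fn M n \<Otimes>\<^sub>M N) (\<lambda>\<omega>. (\<omega>, \<omega> (Suc n)))
       = P x \<bind> (\<lambda>\<omega>. distr (Qmeas M Q (Xn n \<omega>)) (Fn M n \<Otimes>\<^sub>M N) (Pair \<omega>))"
    (is "?L = ?R")
proof -
  interpret prob_space "P x" by (rule P_prob[OF x])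
  have ne: "space (P x) \<noteq> {}" by (rule not_empty)
  have setsR: "sets ?R = sets (Fn M n \<Otimes>\<^sub>M N)"
    by (rule sets_bind[OF _ ne]) simp
  interpret L: prob_space ?L by (rule prob_space_distr[OF pair_meas_F[OF x]])
  show ?thesis
  proof (rule measure_eqI_generator_eq[OF Gen2_Int_stable Gen2_Pow])
    show "sets ?L = sigma_sets (\<Omega> \<times> (UNIV \<times> space M)) (Gen2 n)" by (simp add: sets_FnN)
    show "sets ?R = sigma_sets (\<Omega> \<times> (UNIV \<times> space M)) (Gen2 n)" by (simp add: setsR sets_FnN)
    show "range (\<lambda>i::nat. \<Omega> \<times> ({..real i} \<times> space M)) \<subseteq> Gen2 n"
      by (auto simp: Gen2_def Gen_def intro!: exI[of _ \<Omega>] sets.top[of "Fn M n", simplified])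
    show "(\<Union>i::nat. \<Omega> \<times> ({..real i} \<times> space M)) = \<Omega> \<times> (UNIV \<times> space M)"
      by (auto intro: real_arch_simple)
    show "\<And>i. emeasure ?L (\<Omega> \<times> ({..real i} \<times> space M)) \<noteq> \<infinity>" by simp
  next
    fix X assume "X \<in> Gen2 n"
    then obtain A t B where X: "X = A \<times> ({..t} \<times> B)" and A: "A \<in> sets (Fn M n)" and B: "B \<in> sets M"
      unfolding Gen2_def Gen_def by blast
    have AO: "A \<subseteq> \<Omega>" using sets.sets_into_space[OF A] by simp
    have Xs: "X \<in> sets (Fn M n \<Otimes>\<^sub>M N)" using X A B by auto
    have "emeasure ?L X = emeasure (P x) (A \<inter> {\<omega>\<in>\<Omega>. Tn (Suc n) \<omega> \<le> t \<and> Xn (Suc n) \<omega> \<in> B})"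
      using AO by (subst emeasure_distr[OF pair_meas_F[OF x] Xs])
        (auto simp: X P_space[OF x] Tn_def Xn_def mem_Times_iff intro!: arg_cong[where f="emeasure (P x)"])
    also have "\<dots> = (\<integral>\<^sup>+ \<omega>. indicator A \<omega> * ennreal (if t < 0 then 0 else Q t B (Xn n \<omega>)) \<partial>P x)"
    proof (cases "t < 0")
      case True
      have "emeasure (P x) (A \<inter> {\<omega>\<in>\<Omega>. Tn (Suc n) \<omega> \<le> t \<and> Xn (Suc n) \<omega> \<in> B}) \<le> emeasure (P x) {\<omega>\<in>\<Omega>. Tn (Suc n) \<omega> \<le> 0}"
        using True by (intro emeasure_mono) (auto simp: P_sets[OF x])
      then show ?thesis using True T_pos_null[OF x, of n] by simp
    next
      case False
      then show ?thesis
        using P_trans[OF x A _ B, of t]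
        by (auto simp: nn_integral_set_ennreal mult.commute intro!: nn_integral_cong)
    qed
    also have "\<dots> = emeasure ?R X"
    proof (subst emeasure_bind[OF ne Kd_meas_P[OF x] Xs], rule nn_integral_cong)
      fix \<omega> assume \<omega>: "\<omega> \<in> space (P x)"
      then have \<omega>O: "\<omega> \<in> \<Omega>" by (simp add: P_space[OF x])
      have y: "Xn n \<omega> \<in> space M" using Om_X[OF \<omega>O] .
      have pm: "Pair \<omega> \<in> measurable (Qmeas M Q (Xn n \<omega>)) (Fn M n \<Otimes>\<^sub>M N)"
      proof -
      have "Pair \<omega> \<in> measurable N (Fn M n \<Otimes>\<^sub>M N)" using measurable_Pair2'[of \<omega> "Fn M n" N] \<omega>O by simp
      then show ?thesis by (simp only: measurable_cong_sets[OF Qmeas_sets[OF y] refl])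
    qed
      have "emeasure (distr (Qmeas M Q (Xn n \<omega>)) (Fn M n \<Otimes>\<^sub>M N) (Pair \<omega>)) X
          = emeasure (Qmeas M Q (Xn n \<omega>)) (Pair \<omega> -` X \<inter> (UNIV \<times> space M))"
        by (subst emeasure_distr[OF pm Xs]) (simp add: Qmeas_space[OF y])
      also have "\<dots> = indicator A \<omega> * emeasure (Qmeas M Q (Xn n \<omega>)) ({..t} \<times> B)"
        using sets.sets_into_space[OF B] by (cases "\<omega> \<in> A") (auto simp: X intro!: arg_cong[where f="emeasure _"])
      also have "\<dots> = indicator A \<omega> * ennreal (if t < 0 then 0 else Q t B (Xn n \<omega>))"
        by (simp add: Qmeas_gen[OF y B])
      finally show "indicator A \<omega> * ennreal (if t < 0 then 0 else Q t B (Xn n \<omega>)) =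
          emeasure (distr (Qmeas M Q (Xn n \<omega>)) (Fn M n \<Otimes>\<^sub>M N) (Pair \<omega>)) X" by simp
    qed
    finally show "emeasure ?L X = emeasure ?R X" .
  qed
qed

lemma one_step:
  assumes x: "x \<in> space M" and H: "H \<in> borel_measurable (Fn M n \<Otimes>\<^sub>M N)"
  shows "(\<integral>\<^sup>+ \<omega>. H (\<omega>, \<omega> (Suc n)) \<partial>P x) = (\<integral>\<^sup>+ \<omega>. (\<integral>\<^sup>+ p. H (\<omega>, p) \<partial>Qmeas M Q (Xn n \<omega>)) \<partial>P x)"
proof -
  have "(\<integral>\<^sup>+ \<omega>. H (\<omega>, \<omega> (Suc n)) \<partial>P x) = (\<integral>\<^sup>+ z. H z \<partial>distr (P x) (Fn M n \<Otimes>\<^sub>M N) (\<lambda>\<omega>. (\<omega>, \<omega> (Suc n))))"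
    by (rule nn_integral_distr[symmetric, OF pair_meas_F[OF x]]) (simp only: measurable_cong_sets[OF sets_distr refl] H)
  also have "\<dots> = (\<integral>\<^sup>+ z. H z \<partial>(P x \<bind> (\<lambda>\<omega>. distr (Qmeas M Q (Xn n \<omega>)) (Fn M n \<Otimes>\<^sub>M N) (Pair \<omega>))))"
    by (simp add: nu_eq[OF x])
  also have "\<dots> = (\<integral>\<^sup>+ \<omega>. (\<integral>\<^sup>+ z. H z \<partial>distr (Qmeas M Q (Xn n \<omega>)) (Fn M n \<Otimes>\<^sub>M N) (Pair \<omega>)) \<partial>P x)"
    by (rule nn_integral_bind[OF H Kd_meas_P[OF x]])
  also have "\<dots> = (\<integral>\<^sup>+ \<omega>. (\<integral>\<^sup>+ p. H (\<omega>, p) \<partial>Qmeas M Q (Xn n \<omega>)) \<partial>P x)"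
  proof (rule nn_integral_cong)
    fix \<omega> assume \<omega>: "\<omega> \<in> space (P x)"
    then have \<omega>O: "\<omega> \<in> \<Omega>" by (simp add: P_space[OF x])
    have y: "Xn n \<omega> \<in> space M" using Om_X[OF \<omega>O] .
    have pm: "Pair \<omega> \<in> measurable (Qmeas M Q (Xn n \<omega>)) (Fn M n \<Otimes>\<^sub>M N)"
    proof -
      have "Pair \<omega> \<in> measurable N (Fn M n \<Otimes>\<^sub>M N)" using measurable_Pair2'[of \<omega> "Fn M n" N] \<omega>O by simp
      then show ?thesis by (simp only: measurable_cong_sets[OF Qmeas_sets[OF y] refl])
    qed
    show "(\<integral>\<^sup>+ z. H z \<partial>distr (Qmeas M Q (Xn n \<omega>)) (Fn M n \<Otimes>\<^sub>M N) (Pair \<omega>)) = (\<integral>\<^sup>+ p. H (\<omega>, p) \<partial>Qmeas M Q (Xn n \<omega>))"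
      by (rule nn_integral_distr[OF pm]) (simp only: measurable_cong_sets[OF sets_distr refl] H)
  qed
  finally show ?thesis .
qed

end


context smk begin

lemma u_comp:
  assumes u: "(\<lambda>z. u (fst z) (snd z)) \<in> borel_measurable N"
    and a: "a \<in> borel_measurable K" and b: "b \<in> measurable K M"
  shows "(\<lambda>x. u (a x) (b x)) \<in> borel_measurable K"
  using measurable_compose[OF measurable_Pair[OF a b] u] by simp

lemma lborel_cut:
  assumes "0 < a"
  shows "emeasure lborel ({0..r} \<inter> {..<a}) = ennreal (min a r)"
proof (cases "r < 0")
  case True then show ?thesis by (simp add: ennreal_neg)
next
  case False
  show ?thesis
  proof (cases "a \<le> r")
    case True
    then have "{0..r} \<inter> {..<a} = {0..<a}" by auto
    then show ?thesis using True assms by simp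
  next
    case F: False
    then have "{0..r} \<inter> {..<a} = {0..r}" by auto
    then show ?thesis using F False by simp
  qed
qed

lemma layer:
  assumes y: "y \<in> space M"
  shows "(\<integral>\<^sup>+ t\<in>{0..r}. ennreal (1 - Q t (space M) y) \<partial>lborel) = (\<integral>\<^sup>+ p. ennreal (min (fst p) r) \<partial>Qmeas M Q y)"
proof -
  let ?K = "Qmeas M Q y"
  interpret K: prob_space ?K by (rule Qmeas_prob[OF y])
  interpret L: sigma_finite_measure lborel by (rule sigma_finite_lborel)
  interpret pair_sigma_finite lborel ?K ..
  let ?f = "\<lambda>t p. indicator {0..r} t * indicator {p. t < fst p} p :: ennreal"
  have fm: "case_prod ?f \<in> borel_measurable (lborel \<Otimes>\<^sub>M ?K)"
  proof -
    have "case_prod ?f \<in> borel_measurable (borel \<Otimes>\<^sub>M N)"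
    proof -
      have "{z \<in> space (borel \<Otimes>\<^sub>M N). fst z < fst (snd z)} \<in> sets (borel \<Otimes>\<^sub>M N)" by measurable
      then have "(\<lambda>z. indicator {z. fst z < fst (snd z)} z :: ennreal) \<in> borel_measurable (borel \<Otimes>\<^sub>M N)"
        by (simp add: borel_measurable_indicator' )
      then show ?thesis by (simp add: split_beta' indicator_def[of "{p. _ < fst p}"]) measurable
    qed
    then show ?thesis
      by (subst measurable_cong_sets[OF sets_pair_measure_cong[OF sets_lborel Qmeas_sets[OF y]] refl])
  qed
  have "(\<integral>\<^sup>+ t\<in>{0..r}. ennreal (1 - Q t (space M) y) \<partial>lborel) = (\<integral>\<^sup>+ t. (\<integral>\<^sup>+ p. ?f t p \<partial>?K) \<partial>lborel)"
  proof (rule nn_integral_cong)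
    fix t :: real
    show "ennreal (1 - Q t (space M) y) * indicator {0..r} t = (\<integral>\<^sup>+ p. ?f t p \<partial>?K)"
    proof (cases "t \<in> {0..r}")
      case False then show ?thesis by simp
    next
      case True
      then have t: "0 \<le> t" by simp
      have S: "{p. t < fst p} \<inter> space ?K = (UNIV \<times> space M) - {..t} \<times> space M"
        by (auto simp: Qmeas_space[OF y])
      have "(\<integral>\<^sup>+ p. ?f t p \<partial>?K) = (\<integral>\<^sup>+ p. indicator ({p. t < fst p} \<inter> space ?K) p \<partial>?K)"
        using True by (intro nn_integral_cong) (auto simp: indicator_def)
      also have "\<dots> = emeasure ?K ((UNIV \<times> space M) - {..t} \<times> space M)"
        unfolding S by (rule nn_integral_indicator) (auto simp: Qmeas_sets[OF y])
      also have "\<dots> = emeasure ?K (UNIV \<times> space M) - emeasure ?K ({..t} \<times> space M)"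
        by (rule emeasure_Diff) (auto simp: Qmeas_sets[OF y])
      also have "\<dots> = 1 - ennreal (Q t (space M) y)"
        using K.emeasure_space_1 Qmeas_gen[OF y, of "space M" t] t by (simp add: Qmeas_space[OF y])
      also have "\<dots> = ennreal (1 - Q t (space M) y)"
        using ennreal_minus[of "Q t (space M) y" 1] Q_bounds[OF t _ y, of "space M"] by simp
      finally show ?thesis using True by simp
    qed
  qed
  also have "\<dots> = (\<integral>\<^sup>+ p. (\<integral>\<^sup>+ t. ?f t p \<partial>lborel) \<partial>?K)"
    by (rule Fubini'[OF fm, symmetric])
  also have "\<dots> = (\<integral>\<^sup>+ p. ennreal (min (fst p) r) \<partial>?K)"
  proof (rule nn_integral_cong_AE)
    show "AE p in ?K. (\<integral>\<^sup>+ t. ?f t p \<partial>lborel) = ennreal (min (fst p) r)"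
      using Qmeas_pos[OF y]
    proof (rule AE_mp, intro AE_I2 impI)
      fix p :: "real \<times> 'e" assume "0 < fst p"
      have "(\<integral>\<^sup>+ t. ?f t p \<partial>lborel) = (\<integral>\<^sup>+ t. indicator ({0..r} \<inter> {..<fst p}) t \<partial>lborel)"
        by (intro nn_integral_cong) (auto simp: indicator_def)
      also have "\<dots> = ennreal (min (fst p) r)"
        using lborel_cut[OF \<open>0 < fst p\<close>] by simp
      finally show "(\<integral>\<^sup>+ t. ?f t p \<partial>lborel) = ennreal (min (fst p) r)" .
    qed
  qed
  finally show ?thesis .
qed

definition Cop :: "(real \<Rightarrow> 'e \<Rightarrow> ennreal) \<Rightarrow> real \<Rightarrow> 'e \<Rightarrow> ennreal" where
  "Cop u r y = ennreal (c y) * (\<integral>\<^sup>+ t\<in>{0..r}. ennreal (1 - Q t (space M) y) \<partial>lborel)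
          + (\<integral>\<^sup>+ p. indicator {0..r} (fst p) * u (r - fst p) (snd p) \<partial>Qmeas M Q y)"

lemma Gop_Cop: "Gop M Q c g u r y = min (Cop u r y) (ennreal (g y))"
  by (simp add: Gop_def Cop_def)

lemma Cop_alt:
  assumes y: "y \<in> space M" and u: "(\<lambda>z. u (fst z) (snd z)) \<in> borel_measurable N"
  shows "Cop u r y = (\<integral>\<^sup>+ p. ennreal (c y) * ennreal (min (fst p) r) + indicator {0..r} (fst p) * u (r - fst p) (snd p) \<partial>Qmeas M Q y)"
proof -
  have m1: "(\<lambda>p. ennreal (c y) * ennreal (min (fst p) r)) \<in> borel_measurable (Qmeas M Q y)"
    by (simp add: measurable_cong_sets[OF Qmeas_sets[OF y] refl])
  have m2: "(\<lambda>p. indicator {0..r} (fst p) * u (r - fst p) (snd p) :: ennreal) \<in> borel_measurable (Qmeas M Q y)"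
    unfolding measurable_cong_sets[OF Qmeas_sets[OF y] refl]
    by (intro borel_measurable_times_ennreal u_comp[OF u]) measurable
  show ?thesis
  proof -
    have m3: "(\<lambda>p. ennreal (min (fst p) r)) \<in> borel_measurable (Qmeas M Q y)"
      by (simp add: measurable_cong_sets[OF Qmeas_sets[OF y] refl])
    show ?thesis
      unfolding Cop_def layer[OF y]
      by (subst nn_integral_add[OF m1 m2], subst nn_integral_cmult[OF m3]) simp
  qed
qed

lemma Cop_meas:
  assumes u: "(\<lambda>z. u (fst z) (snd z)) \<in> borel_measurable N"
  shows "(\<lambda>z. Cop u (fst z) (snd z)) \<in> borel_measurable N"
proof -
  have k: "(\<lambda>z. Qmeas M Q (snd z)) \<in> measurable N (subprob_algebra N)"
    by (rule measurable_compose[OF measurable_snd Qmeas_kernel])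
  have i: "(\<lambda>(z, p). ennreal (c (snd z)) * ennreal (min (fst p) (fst z)) + indicator {0..fst z} (fst p) * u (fst z - fst p) (snd p))
     \<in> borel_measurable (N \<Otimes>\<^sub>M N)"
  proof -
    have "(\<lambda>w. u (fst (fst w) - fst (snd w)) (snd (snd w))) \<in> borel_measurable (N \<Otimes>\<^sub>M N)"
      by (rule u_comp[OF u]) measurable
    moreover have "(\<lambda>w. indicator {0..fst (fst w)} (fst (snd w)) :: ennreal) \<in> borel_measurable (N \<Otimes>\<^sub>M N)"
    proof -
      have "{w \<in> space (N \<Otimes>\<^sub>M N). 0 \<le> fst (snd w) \<and> fst (snd w) \<le> fst (fst w)} \<in> sets (N \<Otimes>\<^sub>M N)" by measurable
      then show ?thesis by (simp add: indicator_def borel_measurable_indicator'[unfolded indicator_def])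
    qed
    ultimately show ?thesis unfolding split_beta' by measurable
  qed
  have "(\<lambda>z. \<integral>\<^sup>+ p. ennreal (c (snd z)) * ennreal (min (fst p) (fst z)) + indicator {0..fst z} (fst p) * u (fst z - fst p) (snd p) \<partial>Qmeas M Q (snd z)) \<in> borel_measurable N"
    by (rule nn_integral_measurable_subprob_algebra2[OF i k])
  then show ?thesis
    by (rule measurable_cong[THEN iffD1, rotated]) (auto simp: space_N Cop_alt[OF _ u])
qed

lemma Gop_meas:
  assumes u: "(\<lambda>z. u (fst z) (snd z)) \<in> borel_measurable N"
  shows "(\<lambda>z. Gop M Q c g u (fst z) (snd z)) \<in> borel_measurable N"
  unfolding Gop_Cop using Cop_meas[OF u] by measurable

end


context smk begin

abbreviation "J n \<equiv> Vn M Q c g n"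

lemma J_0: "J 0 = (\<lambda>_ _. 0)" by (simp add: Vn_def)
lemma J_Suc: "J (Suc n) = Gop M Q c g (J n)" by (simp add: Vn_def)

lemma J_meas: "(\<lambda>z. J n (fst z) (snd z)) \<in> borel_measurable N"
  by (induction n) (simp_all add: J_0 J_Suc Gop_meas)

lemma Gop_mono: "(\<And>r y. u r y \<le> v r y) \<Longrightarrow> Gop M Q c g u r y \<le> Gop M Q c g v r y"
  unfolding Gop_def
  by (intro min.mono order.refl add_mono nn_integral_mono mult_left_mono) auto

lemma J_mono: "J n r y \<le> J (Suc n) r y"
proof (induction n arbitrary: r y)
  case 0 then show ?case by (simp add: J_0)
next
  case (Suc n) then show ?case unfolding J_Suc[of "Suc n"] J_Suc[of n] by (intro Gop_mono)
qed

lemma J_incseq: "incseq (\<lambda>n. J n r y)"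
  by (rule incseq_SucI) (rule J_mono)

lemma J_le_g: "y \<in> space M \<Longrightarrow> J n r y \<le> ennreal (g y)"
  by (cases n) (auto simp: J_0 J_Suc Gop_Cop)

lemma Gop_zero: assumes y: "y \<in> space M" shows "Gop M Q c g u 0 y = 0"
proof -
  have a: "(\<integral>\<^sup>+ t\<in>{0..0}. ennreal (1 - Q t (space M) y) \<partial>lborel) = 0"
  proof (rule nn_integral_zero')
    show "AE t in lborel. ennreal (1 - Q t (space M) y) * indicator {0..0} t = 0"
      using AE_lborel_singleton[of "0::real"] by (rule AE_mp) (auto intro!: AE_I2 simp: indicator_def)
  qed
  have b: "(\<integral>\<^sup>+ p. indicator {0..0} (fst p) * u (0 - fst p) (snd p) \<partial>Qmeas M Q y) = 0"
  proof (rule nn_integral_zero')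
    show "AE p in Qmeas M Q y. indicator {0..0} (fst p) * u (0 - fst p) (snd p) = 0"
      using Qmeas_pos[OF y] by (rule AE_mp) (auto intro!: AE_I2 simp: indicator_def)
  qed
  show ?thesis unfolding Gop_Cop Cop_def a b by simp
qed

lemma J_zero: "y \<in> space M \<Longrightarrow> J n 0 y = 0"
  by (cases n) (simp_all add: J_0 J_Suc Gop_zero)

definition "Jinf r y = (SUP n. J n r y)"

lemma Jinf_meas: "(\<lambda>z. Jinf (fst z) (snd z)) \<in> borel_measurable N"
  unfolding Jinf_def using J_meas by measurable

lemma Jinf_zero: "y \<in> space M \<Longrightarrow> Jinf 0 y = 0"
  by (simp add: Jinf_def J_zero)

lemma J_le_Jinf: "J n r y \<le> Jinf r y"
  unfolding Jinf_def by (rule SUP_upper) simp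

lemma Jinf_fix: assumes y: "y \<in> space M" shows "Gop M Q c g Jinf r y = Jinf r y"
proof -
  let ?K = "Qmeas M Q y"
  let ?f = "\<lambda>n p. ennreal (c y) * ennreal (min (fst p) r) + indicator {0..r} (fst p) * J n (r - fst p) (snd p)"
  have fm: "\<And>n. ?f n \<in> borel_measurable ?K"
    unfolding measurable_cong_sets[OF Qmeas_sets[OF y] refl]
    by (intro borel_measurable_add borel_measurable_times_ennreal u_comp[OF J_meas]) measurable
  have inc: "incseq ?f"
    by (intro monoI le_funI add_mono order.refl mult_left_mono) (auto intro: J_incseq[THEN monoD])
  have "Cop Jinf r y = (\<integral>\<^sup>+ p. (SUP n. ?f n p) \<partial>?K)"
    unfolding Cop_alt[OF y Jinf_meas]
    by (intro nn_integral_cong) (simp add: Jinf_def ennreal_SUP_add_right[symmetric] SUP_mult_left_ennreal)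
  also have "\<dots> = (SUP n. integral\<^sup>N ?K (?f n))"
    by (rule nn_integral_monotone_convergence_SUP[OF inc fm])
  also have "\<dots> = (SUP n. Cop (J n) r y)"
    by (simp add: Cop_alt[OF y J_meas])
  finally have C: "Cop Jinf r y = (SUP n. Cop (J n) r y)" .
  have "Gop M Q c g Jinf r y = inf (ennreal (g y)) (SUP n. Cop (J n) r y)"
    by (simp add: Gop_Cop C inf_min min.commute)
  also have "\<dots> = (SUP n. inf (ennreal (g y)) (Cop (J n) r y))"
    by (rule inf_SUP)
  also have "\<dots> = (SUP n. J (Suc n) r y)"
    by (simp add: J_Suc Gop_Cop inf_min min.commute)
  also have "\<dots> = Jinf r y"
    unfolding Jinf_def
  proof (rule antisym)
    show "(SUP n. J (Suc n) r y) \<le> (SUP n. J n r y)"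
      by (rule SUP_mono) blast
    show "(SUP n. J n r y) \<le> (SUP n. J (Suc n) r y)"
      by (rule SUP_mono) (use J_mono in blast)
  qed
  finally show ?thesis .
qed

end


context smk begin

definition "good \<omega> \<longleftrightarrow> Tn 0 \<omega> = 0 \<and> (\<forall>j. 0 < Tn (Suc j) \<omega>)"

lemma Sn_0: "good \<omega> \<Longrightarrow> Sn 0 \<omega> = 0" by (simp add: Sn_def good_def)
lemma Sn_Suc: "Sn (Suc j) \<omega> = Sn j \<omega> + Tn (Suc j) \<omega>" by (simp add: Sn_def)

lemma S_strict: "good \<omega> \<Longrightarrow> j < k \<Longrightarrow> Sn j \<omega> < Sn k \<omega>"
proof (induction k)
  case 0 then show ?case by simp
next
  case (Suc k)
  have "Sn k \<omega> < Sn (Suc k) \<omega>" using Suc.prems by (simp add: Sn_Suc good_def)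
  then show ?case using Suc by (cases "j = k") auto
qed

lemma S_mono: "good \<omega> \<Longrightarrow> j \<le> k \<Longrightarrow> Sn j \<omega> \<le> Sn k \<omega>"
  using S_strict[of \<omega> j k] by (cases "j = k") auto

lemma S_nonneg: assumes "good \<omega>" shows "0 \<le> Sn j \<omega>"
  using S_mono[OF assms, of 0 j] Sn_0[OF assms] by simp

lemma Xproc_at:
  assumes "good \<omega>" "Sn j \<omega> \<le> t" "t < Sn (Suc j) \<omega>"
  shows "Xproc \<omega> t = Xn j \<omega>"
proof -
  have "(LEAST m. t < Sn (Suc m) \<omega>) = j"
  proof (rule Least_equality)
    show "t < Sn (Suc j) \<omega>" by fact
    fix m assume m: "t < Sn (Suc m) \<omega>"
    show "j \<le> m"
    proof (rule ccontr)
      assume "\<not> j \<le> m"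
      then have "Sn (Suc m) \<omega> \<le> Sn j \<omega>" using S_mono[OF assms(1), of "Suc m" j] by simp
      then show False using m assms by simp
    qed
  qed
  then show ?thesis by (simp add: Xproc_def)
qed

lemma exists_interval:
  assumes "good \<omega>" "0 \<le> t" "t < Sn k \<omega>"
  shows "\<exists>j<k. Sn j \<omega> \<le> t \<and> t < Sn (Suc j) \<omega>"
  using assms(3)
proof (induction k)
  case 0 then show ?case using assms Sn_0[OF assms(1)] by simp
next
  case (Suc k)
  show ?case
  proof (cases "t < Sn k \<omega>")
    case True then show ?thesis using Suc.IH by (meson less_SucI)
  next
    case False then show ?thesis using Suc.prems by auto
  qed
qed

lemma interval_unique:
  assumes "good \<omega>" "Sn j \<omega> \<le> t" "t < Sn (Suc j) \<omega>" "Sn m \<omega> \<le> t" "t < Sn (Suc m) \<omega>"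
  shows "m = j"
proof (rule ccontr)
  assume "m \<noteq> j"
  then consider "Suc m \<le> j" | "Suc j \<le> m" by linarith
  then show False
    using S_mono[OF assms(1), of "Suc m" j] S_mono[OF assms(1), of "Suc j" m] assms by cases auto
qed

definition Bc :: "real \<Rightarrow> nat \<Rightarrow> (nat \<Rightarrow> real \<times> 'e) \<Rightarrow> ennreal" where
  "Bc s k \<omega> = (\<Sum>j<k. ennreal (c (Xn j \<omega>)) * ennreal (min (Sn (Suc j) \<omega>) s - min (Sn j \<omega>) s))"

lemma Bc_0[simp]: "Bc s 0 \<omega> = 0" by (simp add: Bc_def)

lemma Bc_Suc: "Bc s (Suc k) \<omega> = Bc s k \<omega> + ennreal (c (Xn k \<omega>)) * ennreal (min (Sn (Suc k) \<omega>) s - min (Sn k \<omega>) s)"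
  by (simp add: Bc_def)

lemma Bc_mono: "j \<le> k \<Longrightarrow> Bc s j \<omega> \<le> Bc s k \<omega>"
  unfolding Bc_def by (rule sum_mono2) auto

lemma A_eq_B:
  assumes g: "good \<omega>" and \<omega>: "\<omega> \<in> \<Omega>" and s: "0 \<le> s"
  shows "(\<integral>\<^sup>+ t\<in>{0..min (Sn k \<omega>) s}. ennreal (c (Xproc \<omega> t)) \<partial>lborel) = Bc s k \<omega>"
proof -
  let ?I = "\<lambda>j. {Sn j \<omega>..<Sn (Suc j) \<omega>} \<inter> {0..s}"
  have "(\<integral>\<^sup>+ t\<in>{0..min (Sn k \<omega>) s}. ennreal (c (Xproc \<omega> t)) \<partial>lborel)
      = (\<integral>\<^sup>+ t. (\<Sum>j<k. ennreal (c (Xn j \<omega>)) * indicator (?I j) t) \<partial>lborel)"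
  proof (rule nn_integral_cong_AE)
    show "AE t in lborel. ennreal (c (Xproc \<omega> t)) * indicator {0..min (Sn k \<omega>) s} t =
        (\<Sum>j<k. ennreal (c (Xn j \<omega>)) * indicator (?I j) t)"
      using AE_lborel_singleton[of "min (Sn k \<omega>) s"]
    proof (rule AE_mp, intro AE_I2 impI)
      fix t :: real assume ne: "t \<noteq> min (Sn k \<omega>) s"
      show "ennreal (c (Xproc \<omega> t)) * indicator {0..min (Sn k \<omega>) s} t =
        (\<Sum>j<k. ennreal (c (Xn j \<omega>)) * indicator (?I j) t)"
      proof (cases "t \<in> {0..min (Sn k \<omega>) s}")
        case True
        then have t: "0 \<le> t" "t < Sn k \<omega>" "t \<le> s" using ne by auto
        obtain j where j: "j < k" "Sn j \<omega> \<le> t" "t < Sn (Suc j) \<omega>"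
          using exists_interval[OF g t(1,2)] by blast
        have "(\<Sum>i<k. ennreal (c (Xn i \<omega>)) * indicator (?I i) t) = ennreal (c (Xn j \<omega>)) * indicator (?I j) t"
        proof -
          have "(\<Sum>i<k. ennreal (c (Xn i \<omega>)) * indicator (?I i) t) = ennreal (c (Xn j \<omega>)) * indicator (?I j) t
             + (\<Sum>i\<in>{..<k}-{j}. ennreal (c (Xn i \<omega>)) * indicator (?I i) t)"
            by (rule sum.remove) (use j in auto)
          moreover have "(\<Sum>i\<in>{..<k}-{j}. ennreal (c (Xn i \<omega>)) * indicator (?I i) t) = 0"
          proof (rule sum.neutral, intro ballI)
            fix i assume i: "i \<in> {..<k} - {j}"
            have "t \<notin> ?I i"
            proof
              assume "t \<in> ?I i"
              then have "Sn i \<omega> \<le> t" "t < Sn (Suc i) \<omega>" by auto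
              then have "i = j" using interval_unique[OF g j(2,3)] by blast
              then show False using i by simp
            qed
            then show "ennreal (c (Xn i \<omega>)) * indicator (?I i) t = 0" by simp
          qed
          ultimately show ?thesis by simp
        qed
        moreover have "t \<in> ?I j" using j t by auto
        ultimately show ?thesis using True Xproc_at[OF g j(2,3)] by simp
      next
        case False
        have "(\<Sum>i<k. ennreal (c (Xn i \<omega>)) * indicator (?I i) t) = 0"
        proof (rule sum.neutral, intro ballI)
          fix i assume i: "i \<in> {..<k}"
          have "Sn (Suc i) \<omega> \<le> Sn k \<omega>" using S_mono[OF g, of "Suc i" k] i by simp
          have "t \<notin> ?I i"
          proof
            assume "t \<in> ?I i"
            then have "0 \<le> t" "t \<le> s" "t < Sn k \<omega>" using \<open>Sn (Suc i) \<omega> \<le> Sn k \<omega>\<close> by auto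
            then show False using False by simp
          qed
          then show "ennreal (c (Xn i \<omega>)) * indicator (?I i) t = 0" by simp
        qed
        then show ?thesis using False by simp
      qed
    qed
  qed
  also have "\<dots> = (\<Sum>j<k. (\<integral>\<^sup>+ t. ennreal (c (Xn j \<omega>)) * indicator (?I j) t \<partial>lborel))"
    by (rule nn_integral_sum) simp
  also have "\<dots> = (\<Sum>j<k. ennreal (c (Xn j \<omega>)) * emeasure lborel (?I j))"
    by (simp add: nn_integral_cmult_indicator)
  also have "\<dots> = Bc s k \<omega>"
    unfolding Bc_def
  proof (rule sum.cong[OF refl])
    fix j
    have lt: "Sn j \<omega> < Sn (Suc j) \<omega>" using S_strict[OF g, of j "Suc j"] by simp
    have nn: "0 \<le> Sn j \<omega>" by (rule S_nonneg[OF g])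
    have "emeasure lborel (?I j) = ennreal (min (Sn (Suc j) \<omega>) s - min (Sn j \<omega>) s)"
    proof (cases "Sn j \<omega> \<le> s")
      case True
      show ?thesis
      proof (cases "Sn (Suc j) \<omega> \<le> s")
        case True2: True
        then have "?I j = {Sn j \<omega>..<Sn (Suc j) \<omega>}" using nn by auto
        then show ?thesis using True True2 lt by simp
      next
        case False
        then have "?I j = {Sn j \<omega>..s}" using nn True by auto
        then show ?thesis using True False by simp
      qed
    next
      case False
      then have "?I j = {}" by auto
      then show ?thesis using False lt by simp
    qed
    then show "ennreal (c (Xn j \<omega>)) * emeasure lborel (?I j) =
      ennreal (c (Xn j \<omega>)) * ennreal (min (Sn (Suc j) \<omega>) s - min (Sn j \<omega>) s)" by simp
  qed
  finally show ?thesis .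
qed

end


context smk begin

lemma reward_fin:
  assumes g: "good \<omega>" and \<omega>: "\<omega> \<in> \<Omega>" and s: "0 \<le> s" and t: "\<tau> \<omega> = enat j"
  shows "reward c g s \<tau> \<omega> = Bc s j \<omega> + (if Sn j \<omega> < s then ennreal (g (Xn j \<omega>)) else 0)"
proof (cases "Sn j \<omega> < s")
  case True
  have "Xproc \<omega> (Sn j \<omega>) = Xn j \<omega>"
    by (rule Xproc_at[OF g order.refl]) (use S_strict[OF g, of j "Suc j"] in simp)
  moreover have "min (Sn j \<omega>) s = Sn j \<omega>" using True by simp
  ultimately show ?thesis
    using True A_eq_B[OF g \<omega> s, of j] by (simp add: reward_def S_tau_def t)
next
  case False
  then have "min (Sn j \<omega>) s = s" by simp
  then show ?thesis
    using False A_eq_B[OF g \<omega> s, of j] by (simp add: reward_def S_tau_def t)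
qed

lemma reward_inf:
  assumes g: "good \<omega>" and \<omega>: "\<omega> \<in> \<Omega>" and s: "0 \<le> s" and t: "\<tau> \<omega> = \<infinity>" and m: "s \<le> Sn m \<omega>"
  shows "reward c g s \<tau> \<omega> = Bc s m \<omega>"
proof -
  have "ereal s \<le> (SUP n. ereal (Sn n \<omega>))"
    using m by (intro SUP_upper2[of m]) auto
  then have "\<not> S_tau \<tau> \<omega> < ereal s" by (simp add: S_tau_def t not_less)
  moreover have "min (Sn m \<omega>) s = s" using m by simp
  ultimately show ?thesis
    using A_eq_B[OF g \<omega> s, of m] by (simp add: reward_def)
qed

definition Rk :: "real \<Rightarrow> ((nat \<Rightarrow> real \<times> 'e) \<Rightarrow> enat) \<Rightarrow> nat \<Rightarrow> (nat \<Rightarrow> real \<times> 'e) \<Rightarrow> ennreal" where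
  "Rk s \<tau> k \<omega> = (case \<tau> \<omega> of enat j \<Rightarrow> if j < k then Bc s j \<omega> + (if Sn j \<omega> < s then ennreal (g (Xn j \<omega>)) else 0) else Bc s k \<omega>
                  | \<infinity> \<Rightarrow> Bc s k \<omega>)"

lemma Rk_0[simp]: "Rk s \<tau> 0 \<omega> = 0"
  by (simp add: Rk_def split: enat.split)

lemma Rk_Suc: "Rk s \<tau> (Suc k) \<omega> = Rk s \<tau> k \<omega>
   + (if \<tau> \<omega> = enat k \<and> Sn k \<omega> < s then ennreal (g (Xn k \<omega>)) else 0)
   + (if enat k < \<tau> \<omega> then ennreal (c (Xn k \<omega>)) * ennreal (min (Sn (Suc k) \<omega>) s - min (Sn k \<omega>) s) else 0)"
proof (cases "\<tau> \<omega>")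
  case (enat j)
  then show ?thesis
    by (cases "j < k"; cases "j = k") (auto simp: Rk_def Bc_Suc add.commute add.left_commute)
next
  case infinity then show ?thesis by (simp add: Rk_def Bc_Suc)
qed

lemma Rk_mono: "Rk s \<tau> k \<omega> \<le> Rk s \<tau> (Suc k) \<omega>"
  unfolding Rk_Suc[of s \<tau> k \<omega>] by (simp add: add.assoc)

lemma Rk_incseq: "incseq (\<lambda>k. Rk s \<tau> k)"
  by (intro incseq_SucI le_funI Rk_mono)

lemma Rk_le_reward:
  assumes g: "good \<omega>" and \<omega>: "\<omega> \<in> \<Omega>" and s: "0 \<le> s" and m: "s \<le> Sn m \<omega>"
  shows "Rk s \<tau> k \<omega> \<le> reward c g s \<tau> \<omega>"
proof (cases "\<tau> \<omega>")
  case (enat j)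
  show ?thesis
  proof (cases "j < k")
    case True then show ?thesis by (simp add: Rk_def enat reward_fin[where \<tau>=\<tau>, OF g \<omega> s enat])
  next
    case False
    then have "Bc s k \<omega> \<le> Bc s j \<omega>" by (intro Bc_mono) simp
    then show ?thesis using False
      by (simp add: Rk_def enat reward_fin[where \<tau>=\<tau>, OF g \<omega> s enat]) (meson add_increasing2 order_trans zero_le)
  qed
next
  case infinity
  have "Bc s k \<omega> \<le> Bc s (max k m) \<omega>" by (intro Bc_mono) simp
  moreover have "s \<le> Sn (max k m) \<omega>" using m S_mono[OF g, of m "max k m"] by simp
  ultimately show ?thesis by (simp add: Rk_def infinity reward_inf[where \<tau>=\<tau>, OF g \<omega> s infinity])
qed

lemma Rk_sup:
  assumes g: "good \<omega>" and \<omega>: "\<omega> \<in> \<Omega>" and s: "0 \<le> s" and m: "s \<le> Sn m \<omega>"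
  shows "(SUP k. Rk s \<tau> k \<omega>) = reward c g s \<tau> \<omega>"
proof (rule antisym)
  show "(SUP k. Rk s \<tau> k \<omega>) \<le> reward c g s \<tau> \<omega>"
    by (rule SUP_least) (rule Rk_le_reward[OF assms])
  show "reward c g s \<tau> \<omega> \<le> (SUP k. Rk s \<tau> k \<omega>)"
  proof (cases "\<tau> \<omega>")
    case (enat j)
    have "reward c g s \<tau> \<omega> = Rk s \<tau> (Suc j) \<omega>"
      by (simp add: Rk_def enat reward_fin[where \<tau>=\<tau>, OF g \<omega> s enat])
    then show ?thesis by (metis SUP_upper UNIV_I)
  next
    case infinity
    have "reward c g s \<tau> \<omega> = Rk s \<tau> m \<omega>"
      by (simp add: Rk_def infinity reward_inf[where \<tau>=\<tau>, OF g \<omega> s infinity m])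
    then show ?thesis by (metis SUP_upper UNIV_I)
  qed
qed

lemma Sn_meas_F: "j \<le> n \<Longrightarrow> Sn j \<in> borel_measurable (Fn M n)"
  unfolding Sn_def by (intro borel_measurable_sum Tn_meas_F) simp

lemma Bc_meas_F: assumes "k \<le> n" shows "Bc s k \<in> borel_measurable (Fn M n)"
  unfolding Bc_def
proof (intro borel_measurable_sum)
  fix j assume j: "j \<in> {..<k}"
  have jn: "j \<le> n" "Suc j \<le> n" using j assms by auto
  note [measurable] = Xn_meas_F[OF jn(1)] Sn_meas_F[OF jn(1)] Sn_meas_F[OF jn(2)]
  show "(\<lambda>\<omega>. ennreal (c (Xn j \<omega>)) * ennreal (min (Sn (Suc j) \<omega>) s - min (Sn j \<omega>) s)) \<in> borel_measurable (Fn M n)"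
    by measurable
qed

lemma st_eq: "\<tau> \<in> stopping_times M \<Longrightarrow> j \<le> n \<Longrightarrow> {\<omega>\<in>\<Omega>. \<tau> \<omega> = enat j} \<in> sets (Fn M n)"
  using Fn_mono[of j n] unfolding stopping_times_def by auto

lemma nat_gt_iff: "(\<forall>j\<le>n. m \<noteq> j) \<longleftrightarrow> n < (m::nat)"
  by (metis not_less order_refl)

lemma enat_gt_iff: "enat n < t \<longleftrightarrow> (\<forall>j\<le>n. t \<noteq> enat j)"
  by (cases t) (simp_all add: nat_gt_iff)

lemma st_gt: assumes "\<tau> \<in> stopping_times M" shows "{\<omega>\<in>\<Omega>. enat n < \<tau> \<omega>} \<in> sets (Fn M n)"
proof -
  have "{\<omega>\<in>\<Omega>. enat n < \<tau> \<omega>} = \<Omega> - (\<Union>j\<in>{..n}. {\<omega>\<in>\<Omega>. \<tau> \<omega> = enat j})"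
    by (auto simp: enat_gt_iff)
  also have "\<dots> \<in> sets (Fn M n)"
    using st_eq[OF assms] by (intro sets.Diff sets.finite_UN) (auto intro: sets.top[of "Fn M n", simplified])
  finally show ?thesis .
qed

definition "tk \<tau> k \<omega> = (case \<tau> \<omega> of enat j \<Rightarrow> min j k | \<infinity> \<Rightarrow> k)"

lemma tk_eq_k: "tk \<tau> k \<omega> = k \<longleftrightarrow> (\<forall>j<k. \<tau> \<omega> \<noteq> enat j)"
  by (cases "\<tau> \<omega>") (auto simp: tk_def min_def not_less le_less)

lemma tk_lt: "a < k \<Longrightarrow> tk \<tau> k \<omega> = a \<longleftrightarrow> \<tau> \<omega> = enat a"
  by (cases "\<tau> \<omega>") (auto simp: tk_def min_def not_less)

lemma tk_le: "tk \<tau> k \<omega> \<le> k"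
  by (cases "\<tau> \<omega>") (auto simp: tk_def)

lemma tk_meas: assumes "\<tau> \<in> stopping_times M" shows "tk \<tau> k \<in> measurable (Fn M k) (count_space UNIV)"
  unfolding measurable_count_space_eq2_countable
proof (intro conjI ballI)
  show "tk \<tau> k \<in> space (Fn M k) \<rightarrow> UNIV" by simp
  fix a :: nat
  show "tk \<tau> k -` {a} \<inter> space (Fn M k) \<in> sets (Fn M k)"
  proof (cases "a < k")
    case True
    have "tk \<tau> k -` {a} \<inter> space (Fn M k) = {\<omega>\<in>\<Omega>. \<tau> \<omega> = enat a}"
      by (rule set_eqI) (simp add: tk_lt[OF True] conj_commute)
    then show ?thesis using st_eq[OF assms, of a k] True by simp
  next
    case False
    show ?thesis
    proof (cases "a = k")
      case True
      have "tk \<tau> k -` {a} \<inter> space (Fn M k) = \<Omega> - (\<Union>j\<in>{..<k}. {\<omega>\<in>\<Omega>. \<tau> \<omega> = enat j})"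
        using True by (auto simp: tk_eq_k)
      also have "\<dots> \<in> sets (Fn M k)"
        using st_eq[OF assms] by (intro sets.Diff sets.finite_UN) (auto intro: sets.top[of "Fn M k", simplified])
      finally show ?thesis .
    next
      case F2: False
      then have "tk \<tau> k -` {a} \<inter> space (Fn M k) = {}"
        using False F2 tk_le[of \<tau> k] by (auto simp: le_less)
      then show ?thesis by simp
    qed
  qed
qed

lemma Rk_meas: assumes "\<tau> \<in> stopping_times M" shows "Rk s \<tau> k \<in> borel_measurable (Fn M k)"
proof -
  let ?F = "\<lambda>i \<omega>. if i < k then Bc s i \<omega> + (if Sn i \<omega> < s then ennreal (g (Xn i \<omega>)) else 0) else Bc s k \<omega>"
  have F: "(\<lambda>\<omega>. ?F i \<omega>) \<in> borel_measurable (Fn M k)" for i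
  proof (cases "i < k")
    case True
    have ik: "i \<le> k" using True by simp
    note [measurable] = Xn_meas_F[OF ik] Sn_meas_F[OF ik] Bc_meas_F[OF ik]
    show ?thesis using True by simp
  next
    case False
    then show ?thesis using Bc_meas_F[of k k] by simp
  qed
  have "(\<lambda>\<omega>. ?F (tk \<tau> k \<omega>) \<omega>) \<in> borel_measurable (Fn M k)"
    by (rule measurable_compose_countable[OF F tk_meas[OF assms]])
  moreover have "(\<lambda>\<omega>. ?F (tk \<tau> k \<omega>) \<omega>) = Rk s \<tau> k"
    by (auto simp: Rk_def tk_def fun_eq_iff split: enat.splits)
  ultimately show ?thesis by simp
qed

end


context smk begin

lemma AE_good: assumes x: "x \<in> space M" shows "AE \<omega> in P x. good \<omega>"
proof -
  have "AE \<omega> in P x. \<forall>j. 0 < Tn (Suc j) \<omega>"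
  proof (subst AE_all_countable, intro allI)
    fix j
    show "AE \<omega> in P x. 0 < Tn (Suc j) \<omega>"
      by (rule AE_I'[of "{\<omega>\<in>\<Omega>. Tn (Suc j) \<omega> \<le> 0}"])
         (auto simp: null_sets_def T_pos_null[OF x] P_sets[OF x] P_space[OF x])
  qed
  moreover have "AE \<omega> in P x. Tn 0 \<omega> = 0"
    using P_init[OF x] by (rule AE_mp) (auto intro!: AE_I2 simp: Tn_def)
  ultimately show ?thesis unfolding good_def by (auto elim: AE_mp intro!: AE_I2)
qed

definition "fr \<delta> n \<omega> = (\<Prod>j<n. if \<delta> < Tn (Suc j) \<omega> then 1/2 else (1::real))"

lemma fr_meas: "(\<lambda>\<omega>. ennreal (fr \<delta> n \<omega>)) \<in> borel_measurable (Fn M n)"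
proof -
  have "(\<lambda>\<omega>. fr \<delta> n \<omega>) \<in> borel_measurable (Fn M n)"
    unfolding fr_def
  proof (rule borel_measurable_prod)
    fix j assume "j \<in> {..<n}"
    then have [measurable]: "Tn (Suc j) \<in> borel_measurable (Fn M n)" by (intro Tn_meas_F) simp
    show "(\<lambda>\<omega>. if \<delta> < Tn (Suc j) \<omega> then 1/2 else (1::real)) \<in> borel_measurable (Fn M n)" by measurable
  qed
  then show ?thesis by measurable
qed

lemma fr_Suc: "fr \<delta> (Suc n) \<omega> = fr \<delta> n \<omega> * (if \<delta> < Tn (Suc n) \<omega> then 1/2 else 1)"
  by (simp add: fr_def)

lemma fr_nonneg: "0 \<le> fr \<delta> n \<omega>"
  unfolding fr_def by (intro prod_nonneg) auto

lemma half_half: "inverse 2 + inverse 2 = (1::ennreal)"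
proof -
  have "ennreal (1/2) + ennreal (1/2) = ennreal (1/2 + 1/2)"
    by (rule ennreal_plus[symmetric]) auto
  then show ?thesis by (simp del: ennreal_plus)
qed

lemma half_lin: assumes q: "0 \<le> q" shows "inverse 2 + inverse 2 * ennreal q = ennreal (1/2 + q/2)"
proof -
  have a: "ennreal (1/2 + q/2) = ennreal (1/2) + ennreal (q/2)" using q by (intro ennreal_plus) auto
  have b: "ennreal (q/2) = ennreal (1/2) * ennreal q"
    using q ennreal_mult[of "1/2" q] by (simp add: mult.commute)
  show ?thesis unfolding a b ennreal_half ..
qed

lemma h_int:
  assumes y: "y \<in> space M" and d: "0 \<le> \<delta>"
  shows "(\<integral>\<^sup>+ p. ennreal (if \<delta> < fst p then 1/2 else 1) \<partial>Qmeas M Q y) = ennreal (1/2 + Q \<delta> (space M) y / 2)"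
proof -
  let ?K = "Qmeas M Q y"
  interpret K: prob_space ?K by (rule Qmeas_prob[OF y])
  have "(\<integral>\<^sup>+ p. ennreal (if \<delta> < fst p then 1/2 else 1) \<partial>?K) = (\<integral>\<^sup>+ p. ennreal (1/2) + ennreal (1/2) * indicator ({..\<delta>} \<times> space M) p \<partial>?K)"
    by (intro nn_integral_cong) (auto simp: Qmeas_space[OF y] indicator_def half_half)
  also have "\<dots> = ennreal (1/2) * emeasure ?K (space ?K) + ennreal (1/2) * emeasure ?K ({..\<delta>} \<times> space M)"
  proof -
    have S: "{..\<delta>} \<times> space M \<in> sets ?K" by (simp add: Qmeas_sets[OF y])
    show ?thesis
      by (subst nn_integral_add) (auto simp: S nn_integral_cmult_indicator intro!: borel_measurable_times_ennreal borel_measurable_indicator)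
  qed
  also have "\<dots> = ennreal (1/2 + Q \<delta> (space M) y / 2)"
    using Qmeas_gen[OF y, of "space M" \<delta>] d Q_bounds[OF d _ y, of "space M"]
    by (simp add: K.emeasure_space_1 half_lin)
  finally show ?thesis .
qed

lemma fr_int:
  assumes x: "x \<in> space M" and d: "0 < \<delta>" and e: "0 < \<epsilon>" "\<epsilon> \<le> 1"
    and reg: "\<forall>y\<in>space M. Q \<delta> (space M) y \<le> 1 - \<epsilon>"
  shows "(\<integral>\<^sup>+ \<omega>. ennreal (fr \<delta> n \<omega>) \<partial>P x) \<le> ennreal ((1 - \<epsilon>/2)^n)"
proof (induction n)
  case 0 then show ?case
    using prob_space.emeasure_space_1[OF P_prob[OF x]] by (simp add: fr_def)
next
  case (Suc n)
  let ?H = "\<lambda>z::(nat \<Rightarrow> real \<times> 'e) \<times> (real \<times> 'e). ennreal (fr \<delta> n (fst z)) * ennreal (if \<delta> < fst (snd z) then 1/2 else 1)"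
  have Hm: "?H \<in> borel_measurable (Fn M n \<Otimes>\<^sub>M N)"
    using fr_meas[of \<delta> n] by measurable
  have "(\<integral>\<^sup>+ \<omega>. ennreal (fr \<delta> (Suc n) \<omega>) \<partial>P x) = (\<integral>\<^sup>+ \<omega>. ?H (\<omega>, \<omega> (Suc n)) \<partial>P x)"
    by (intro nn_integral_cong) (simp add: fr_Suc ennreal_mult[symmetric] fr_nonneg Tn_def)
  also have "\<dots> = (\<integral>\<^sup>+ \<omega>. (\<integral>\<^sup>+ p. ?H (\<omega>, p) \<partial>Qmeas M Q (Xn n \<omega>)) \<partial>P x)"
    by (rule one_step[OF x Hm])
  also have "\<dots> \<le> (\<integral>\<^sup>+ \<omega>. ennreal (fr \<delta> n \<omega>) * ennreal (1 - \<epsilon>/2) \<partial>P x)"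
  proof (rule nn_integral_mono)
    fix \<omega> assume "\<omega> \<in> space (P x)"
    then have y: "Xn n \<omega> \<in> space M" using Om_X P_space[OF x] by simp
    have "(\<integral>\<^sup>+ p. ?H (\<omega>, p) \<partial>Qmeas M Q (Xn n \<omega>)) = ennreal (fr \<delta> n \<omega>) * (\<integral>\<^sup>+ p. ennreal (if \<delta> < fst p then 1/2 else 1) \<partial>Qmeas M Q (Xn n \<omega>))"
      by (simp add: nn_integral_cmult measurable_cong_sets[OF Qmeas_sets[OF y] refl])
    also have "\<dots> = ennreal (fr \<delta> n \<omega>) * ennreal (1/2 + Q \<delta> (space M) (Xn n \<omega>) / 2)"
      using d by (simp add: h_int[OF y])
    also have "\<dots> \<le> ennreal (fr \<delta> n \<omega>) * ennreal (1 - \<epsilon>/2)"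
      using reg y by (intro mult_left_mono ennreal_leI) auto
    finally show "(\<integral>\<^sup>+ p. ?H (\<omega>, p) \<partial>Qmeas M Q (Xn n \<omega>)) \<le> ennreal (fr \<delta> n \<omega>) * ennreal (1 - \<epsilon>/2)" .
  qed
  also have "\<dots> = (\<integral>\<^sup>+ \<omega>. ennreal (fr \<delta> n \<omega>) \<partial>P x) * ennreal (1 - \<epsilon>/2)"
    by (rule nn_integral_multc) (rule P_meas[OF x Fn_meas_path[OF fr_meas]])
  also have "\<dots> \<le> ennreal ((1 - \<epsilon>/2)^n) * ennreal (1 - \<epsilon>/2)"
    by (intro mult_right_mono Suc.IH) simp
  also have "\<dots> = ennreal ((1 - \<epsilon>/2)^Suc n)"
    using e by (simp add: ennreal_mult[symmetric] mult.commute)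
  finally show ?case .
qed

end


context smk begin

lemma Sn_meas[measurable]: "Sn j \<in> borel_measurable (path_space M)"
  by (rule Fn_meas_path[OF Sn_meas_F[of j j]]) simp

lemma good_meas[measurable]: "Measurable.pred (path_space M) good"
  unfolding good_def by measurable

lemma fr_lower:
  assumes g: "good \<omega>" and d: "0 < \<delta>" and m: "\<forall>k. Sn k \<omega> < r"
  shows "(1/2::real) ^ nat \<lceil>r / \<delta>\<rceil> \<le> fr \<delta> n \<omega>"
proof -
  let ?A = "{..<n} \<inter> {j. \<delta> < Tn (Suc j) \<omega>}"
  have "fr \<delta> n \<omega> = (\<Prod>j\<in>?A. 1/2) * (\<Prod>j\<in>{..<n} \<inter> - {j. \<delta> < Tn (Suc j) \<omega>}. 1)"
    unfolding fr_def by (rule prod.If_cases) simp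
  also have "\<dots> = (1/2) ^ card ?A" by simp
  finally have fr: "fr \<delta> n \<omega> = (1/2) ^ card ?A" .
  have "real (card ?A) * \<delta> \<le> (\<Sum>j\<in>?A. Tn (Suc j) \<omega>)"
    by (rule sum_bounded_below) auto
  also have "\<dots> \<le> (\<Sum>j<n. Tn (Suc j) \<omega>)"
    using g by (intro sum_mono2) (auto simp: good_def less_imp_le)
  also have "\<dots> = Sn n \<omega>"
    using g by (simp add: Sn_def sum.atMost_shift good_def)
  also have "\<dots> < r" using m by simp
  finally have "real (card ?A) < r / \<delta>" using d by (simp add: field_simps)
  then have "card ?A \<le> nat \<lceil>r / \<delta>\<rceil>" by linarith
  then show ?thesis unfolding fr by (intro power_decreasing) auto
qed

lemma AE_unbounded:
  assumes x: "x \<in> space M"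
  shows "AE \<omega> in P x. \<forall>r. \<exists>k. r \<le> Sn k \<omega>"
proof -
  interpret prob_space "P x" by (rule P_prob[OF x])
  obtain \<delta> \<epsilon>0 where d: "0 < \<delta>" and e0: "0 < \<epsilon>0" and r0: "\<forall>y\<in>space M. Q \<delta> (space M) y \<le> 1 - \<epsilon>0"
    using reg by blast
  define \<epsilon> where "\<epsilon> = min \<epsilon>0 1"
  have e: "0 < \<epsilon>" "\<epsilon> \<le> 1" using e0 by (auto simp: \<epsilon>_def)
  have rg: "\<forall>y\<in>space M. Q \<delta> (space M) y \<le> 1 - \<epsilon>" using r0 by (auto simp: \<epsilon>_def)
  have "AE \<omega> in P x. \<forall>m::nat. good \<omega> \<longrightarrow> (\<exists>k. real m \<le> Sn k \<omega>)"
  proof (subst AE_all_countable, intro allI)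
    fix m :: nat
    let ?r = "real m"
    let ?K = "nat \<lceil>?r / \<delta>\<rceil>"
    let ?B = "{\<omega>\<in>\<Omega>. good \<omega> \<and> (\<forall>k. Sn k \<omega> < ?r)}"
    have Bs: "?B \<in> sets (P x)" by (simp add: P_sets[OF x])
    have bound: "ennreal ((1/2)^?K) * emeasure (P x) ?B \<le> ennreal ((1 - \<epsilon>/2)^n)" for n
    proof -
      have "ennreal ((1/2)^?K) * emeasure (P x) ?B = (\<integral>\<^sup>+ \<omega>. ennreal ((1/2)^?K) * indicator ?B \<omega> \<partial>P x)"
        by (rule nn_integral_cmult_indicator[symmetric, OF Bs])
      also have "\<dots> \<le> (\<integral>\<^sup>+ \<omega>. ennreal (fr \<delta> n \<omega>) \<partial>P x)"
        by (intro nn_integral_mono) (auto simp: indicator_def intro!: ennreal_leI fr_lower[OF _ d])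
      also have "\<dots> \<le> ennreal ((1 - \<epsilon>/2)^n)" by (rule fr_int[OF x d e rg])
      finally show ?thesis .
    qed
    have real_bound: "(1/2)^?K * prob ?B \<le> (1 - \<epsilon>/2)^n" for n
    proof -
      have "ennreal ((1/2)^?K * prob ?B) \<le> ennreal ((1 - \<epsilon>/2)^n)"
        using bound[of n] by (simp add: emeasure_eq_measure ennreal_mult)
      then show ?thesis using e by (subst (asm) ennreal_le_iff) auto
    qed
    have lim: "(\<lambda>n. (1 - \<epsilon>/2)^n) \<longlonglongrightarrow> 0"
      by (rule LIMSEQ_power_zero) (use e in auto)
    have "(1/2)^?K * prob ?B \<le> 0"
      by (rule LIMSEQ_le_const[OF lim]) (use real_bound in auto)
    moreover have "0 < (1/2::real)^?K" by simp
    ultimately have "prob ?B = 0" using measure_nonneg[of "P x" ?B]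
      by (simp add: mult_le_0_iff)
    then have "?B \<in> null_sets (P x)" using Bs by (simp add: null_sets_def emeasure_eq_measure)
    then show "AE \<omega> in P x. good \<omega> \<longrightarrow> (\<exists>k. ?r \<le> Sn k \<omega>)"
      by (rule AE_I') (auto simp: P_space[OF x] not_le)
  qed
  then show ?thesis using AE_good[OF x]
  proof (eventually_elim)
    case (elim \<omega>)
    show ?case
    proof
      fix r :: real
      obtain m :: nat where "r \<le> real m" using real_arch_simple by blast
      then show "\<exists>k. r \<le> Sn k \<omega>" using elim by (meson order_trans)
    qed
  qed
qed

end


context smk begin

lemma step_id:
  assumes x: "x \<in> space M" and \<tau>: "\<tau> \<in> stopping_times M"
    and u: "(\<lambda>z. u (fst z) (snd z)) \<in> borel_measurable N" and u0: "\<forall>y\<in>space M. u 0 y = 0"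
  shows "(\<integral>\<^sup>+ \<omega>. Rk s \<tau> (Suc k) \<omega> + (if enat (Suc k) \<le> \<tau> \<omega> \<and> Sn (Suc k) \<omega> < s then u (s - Sn (Suc k) \<omega>) (Xn (Suc k) \<omega>) else 0) \<partial>P x)
       = (\<integral>\<^sup>+ \<omega>. Rk s \<tau> k \<omega> + (if \<tau> \<omega> = enat k \<and> Sn k \<omega> < s then ennreal (g (Xn k \<omega>)) else 0)
              + (if enat k < \<tau> \<omega> \<and> Sn k \<omega> < s then Cop u (s - Sn k \<omega>) (Xn k \<omega>) else 0) \<partial>P x)"
proof -
  define A where "A \<omega> = Rk s \<tau> k \<omega> + (if \<tau> \<omega> = enat k \<and> Sn k \<omega> < s then ennreal (g (Xn k \<omega>)) else 0)" for \<omega>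
  define Hr where "Hr \<omega> p = (if enat k < \<tau> \<omega> then ennreal (c (Xn k \<omega>)) * ennreal (min (Sn k \<omega> + fst p) s - min (Sn k \<omega>) s)
       + (if Sn k \<omega> + fst p < s then u (s - Sn k \<omega> - fst p) (snd p) else 0) else 0)" for \<omega> p
  define Hh where "Hh z = A (fst z) + Hr (fst z) (snd z)" for z
  note [measurable] = Sn_meas_F[of k k, OF order.refl] Xn_meas_F[of k k, OF order.refl]
  have p1[measurable]: "Measurable.pred (Fn M k) (\<lambda>\<omega>. \<tau> \<omega> = enat k)"
    using st_eq[OF \<tau> order.refl, of k] by (simp add: pred_def)
  have p2: "Measurable.pred (Fn M k \<Otimes>\<^sub>M N) (\<lambda>z. enat k < \<tau> (fst z))"
    using st_gt[OF \<tau>, of k] by (intro pred_sets1[where M="Fn M k"]) simp_all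
  have Am[measurable]: "A \<in> borel_measurable (Fn M k)"
    unfolding A_def using Rk_meas[OF \<tau>, of s k] by measurable
  have um: "(\<lambda>z. u (s - Sn k (fst z) - fst (snd z)) (snd (snd z))) \<in> borel_measurable (Fn M k \<Otimes>\<^sub>M N)"
    by (rule u_comp[OF u]) measurable
  have Hrm: "(\<lambda>z. Hr (fst z) (snd z)) \<in> borel_measurable (Fn M k \<Otimes>\<^sub>M N)"
    unfolding Hr_def using um p2 by measurable
  have Hm: "Hh \<in> borel_measurable (Fn M k \<Otimes>\<^sub>M N)"
    unfolding Hh_def using Hrm by measurable
  have "(\<integral>\<^sup>+ \<omega>. Rk s \<tau> (Suc k) \<omega> + (if enat (Suc k) \<le> \<tau> \<omega> \<and> Sn (Suc k) \<omega> < s then u (s - Sn (Suc k) \<omega>) (Xn (Suc k) \<omega>) else 0) \<partial>P x)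
      = (\<integral>\<^sup>+ \<omega>. Hh (\<omega>, \<omega> (Suc k)) \<partial>P x)"
  proof (rule nn_integral_cong)
    fix \<omega>
    have e: "enat (Suc k) \<le> \<tau> \<omega> \<longleftrightarrow> enat k < \<tau> \<omega>" by (simp add: Suc_ile_eq)
    show "Rk s \<tau> (Suc k) \<omega> + (if enat (Suc k) \<le> \<tau> \<omega> \<and> Sn (Suc k) \<omega> < s then u (s - Sn (Suc k) \<omega>) (Xn (Suc k) \<omega>) else 0)
        = Hh (\<omega>, \<omega> (Suc k))"
      unfolding Hh_def A_def Hr_def Rk_Suc e
      by (cases "enat k < \<tau> \<omega>") (auto simp: Sn_Suc Tn_def Xn_def add.assoc diff_diff_eq)
  qed
  also have "\<dots> = (\<integral>\<^sup>+ \<omega>. (\<integral>\<^sup>+ p. Hh (\<omega>, p) \<partial>Qmeas M Q (Xn k \<omega>)) \<partial>P x)"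
    by (rule one_step[OF x Hm])
  also have "\<dots> = (\<integral>\<^sup>+ \<omega>. A \<omega> + (if enat k < \<tau> \<omega> \<and> Sn k \<omega> < s then Cop u (s - Sn k \<omega>) (Xn k \<omega>) else 0) \<partial>P x)"
  proof (rule nn_integral_cong)
    fix \<omega> assume "\<omega> \<in> space (P x)"
    then have \<omega>O: "\<omega> \<in> \<Omega>" by (simp add: P_space[OF x])
    have y: "Xn k \<omega> \<in> space M" using Om_X[OF \<omega>O] .
    let ?K = "Qmeas M Q (Xn k \<omega>)"
    interpret K: prob_space ?K by (rule Qmeas_prob[OF y])
    have Hrm': "Hr \<omega> \<in> borel_measurable ?K"
    proof -
      have "(\<lambda>p. Hr (fst (\<omega>, p)) (snd (\<omega>, p))) \<in> borel_measurable N"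
        by (rule measurable_compose[OF _ Hrm]) (use \<omega>O in simp)
      then show ?thesis by (simp add: measurable_cong_sets[OF Qmeas_sets[OF y] refl])
    qed
    have "(\<integral>\<^sup>+ p. Hh (\<omega>, p) \<partial>?K) = (\<integral>\<^sup>+ p. A \<omega> \<partial>?K) + (\<integral>\<^sup>+ p. Hr \<omega> p \<partial>?K)"
      unfolding Hh_def by (simp add: nn_integral_add Hrm')
    also have "(\<integral>\<^sup>+ p. A \<omega> \<partial>?K) = A \<omega>" by (simp add: K.emeasure_space_1)
    also have "(\<integral>\<^sup>+ p. Hr \<omega> p \<partial>?K) = (if enat k < \<tau> \<omega> \<and> Sn k \<omega> < s then Cop u (s - Sn k \<omega>) (Xn k \<omega>) else 0)"
    proof (cases "enat k < \<tau> \<omega>")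
      case False then show ?thesis by (simp add: Hr_def)
    next
      case T: True
      show ?thesis
      proof (cases "Sn k \<omega> < s")
        case False
        have "(\<integral>\<^sup>+ p. Hr \<omega> p \<partial>?K) = (\<integral>\<^sup>+ p. 0 \<partial>?K)"
        proof (rule nn_integral_cong_AE)
          show "AE p in ?K. Hr \<omega> p = 0"
            using Qmeas_pos[OF y] by (rule AE_mp) (use False T in \<open>auto intro!: AE_I2 simp: Hr_def\<close>)
        qed
        then show ?thesis using False by simp
      next
        case True
        have "(\<integral>\<^sup>+ p. Hr \<omega> p \<partial>?K) = (\<integral>\<^sup>+ p. ennreal (c (Xn k \<omega>)) * ennreal (min (fst p) (s - Sn k \<omega>))
              + indicator {0..s - Sn k \<omega>} (fst p) * u (s - Sn k \<omega> - fst p) (snd p) \<partial>?K)"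
        proof (rule nn_integral_cong_AE)
          show "AE p in ?K. Hr \<omega> p = ennreal (c (Xn k \<omega>)) * ennreal (min (fst p) (s - Sn k \<omega>))
              + indicator {0..s - Sn k \<omega>} (fst p) * u (s - Sn k \<omega> - fst p) (snd p)"
            using Qmeas_pos[OF y]
          proof (rule AE_mp, intro AE_I2 impI)
            fix p assume p: "p \<in> space ?K" "0 < fst p"
            then have py: "snd p \<in> space M" by (auto simp: Qmeas_space[OF y])
            have m: "min (Sn k \<omega> + fst p) s - min (Sn k \<omega>) s = min (fst p) (s - Sn k \<omega>)"
              using True by (simp add: min_def)
            show "Hr \<omega> p = ennreal (c (Xn k \<omega>)) * ennreal (min (fst p) (s - Sn k \<omega>))
              + indicator {0..s - Sn k \<omega>} (fst p) * u (s - Sn k \<omega> - fst p) (snd p)"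
              unfolding Hr_def using T p u0 py m
              by (cases "fst p = s - Sn k \<omega>") (auto simp: indicator_def)
          qed
        qed
        also have "\<dots> = Cop u (s - Sn k \<omega>) (Xn k \<omega>)"
          by (rule Cop_alt[OF y u, symmetric])
        finally show ?thesis using T True by simp
      qed
    qed
    finally show "(\<integral>\<^sup>+ p. Hh (\<omega>, p) \<partial>?K) = A \<omega> + (if enat k < \<tau> \<omega> \<and> Sn k \<omega> < s then Cop u (s - Sn k \<omega>) (Xn k \<omega>) else 0)" .
  qed
  finally show ?thesis by (simp add: A_def)
qed

end


context smk begin

lemma AE_good_unb: "x \<in> space M \<Longrightarrow> AE \<omega> in P x. good \<omega> \<and> (\<forall>r. \<exists>k. r \<le> Sn k \<omega>)"
  using AE_good AE_unbounded by (auto elim: AE_mp intro!: AE_I2)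

lemma AE_start: "x \<in> space M \<Longrightarrow> AE \<omega> in P x. Sn 0 \<omega> = 0 \<and> Xn 0 \<omega> = x"
  using P_init by (rule AE_mp) (auto intro!: AE_I2 simp: Sn_def Tn_def Xn_def)

lemma Rk_le_reward_AE:
  assumes x: "x \<in> space M" and s: "0 \<le> s"
  shows "(\<integral>\<^sup>+ \<omega>. Rk s \<tau> n \<omega> \<partial>P x) \<le> (\<integral>\<^sup>+ \<omega>. reward c g s \<tau> \<omega> \<partial>P x)"
proof (rule nn_integral_mono_AE)
  show "AE \<omega> in P x. Rk s \<tau> n \<omega> \<le> reward c g s \<tau> \<omega>"
    using AE_good_unb[OF x]
  proof (rule AE_mp, intro AE_I2 impI)
    fix \<omega> assume \<omega>: "\<omega> \<in> space (P x)" and gu: "good \<omega> \<and> (\<forall>r. \<exists>k. r \<le> Sn k \<omega>)"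
    then obtain m where "s \<le> Sn m \<omega>" by blast
    then show "Rk s \<tau> n \<omega> \<le> reward c g s \<tau> \<omega>"
      using Rk_le_reward[OF _ _ s] gu \<omega> P_space[OF x] by auto
  qed
qed

lemma partA:
  assumes x: "x \<in> space M" and s: "0 \<le> s" and \<tau>: "\<tau> \<in> stopping_times M"
  shows "J n s x \<le> Vtau P c g \<tau> s x"
proof -
  interpret prob_space "P x" by (rule P_prob[OF x])
  define Z where "Z k \<omega> = Rk s \<tau> k \<omega> + (if enat k \<le> \<tau> \<omega> \<and> Sn k \<omega> < s then J (n - k) (s - Sn k \<omega>) (Xn k \<omega>) else 0)" for k \<omega>
  have base: "J n s x \<le> (\<integral>\<^sup>+ \<omega>. Z 0 \<omega> \<partial>P x)"
  proof (cases "s = 0")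
    case True then show ?thesis using J_zero[OF x] by simp
  next
    case False
    then have sp: "0 < s" using s by simp
    have "AE \<omega> in P x. Z 0 \<omega> = J n s x"
      using AE_start[OF x] by (rule AE_mp) (auto intro!: AE_I2 simp: Z_def sp zero_enat_def[symmetric])
    then have "(\<integral>\<^sup>+ \<omega>. Z 0 \<omega> \<partial>P x) = (\<integral>\<^sup>+ \<omega>. J n s x \<partial>P x)"
      by (rule nn_integral_cong_AE)
    then show ?thesis by (simp add: emeasure_space_1)
  qed
  have step: "(\<integral>\<^sup>+ \<omega>. Z k \<omega> \<partial>P x) \<le> (\<integral>\<^sup>+ \<omega>. Z (Suc k) \<omega> \<partial>P x)" if k: "k < n" for k
  proof -
    have nk: "n - k = Suc (n - Suc k)" using k by simp
    have "(\<integral>\<^sup>+ \<omega>. Z (Suc k) \<omega> \<partial>P x) = (\<integral>\<^sup>+ \<omega>. Rk s \<tau> k \<omega> + (if \<tau> \<omega> = enat k \<and> Sn k \<omega> < s then ennreal (g (Xn k \<omega>)) else 0)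
              + (if enat k < \<tau> \<omega> \<and> Sn k \<omega> < s then Cop (J (n - Suc k)) (s - Sn k \<omega>) (Xn k \<omega>) else 0) \<partial>P x)"
      unfolding Z_def
      by (rule step_id[OF x \<tau> J_meas]) (simp add: J_zero)
    also have "\<dots> \<ge> (\<integral>\<^sup>+ \<omega>. Z k \<omega> \<partial>P x)"
    proof (rule nn_integral_mono)
      fix \<omega> assume "\<omega> \<in> space (P x)"
      then have y: "Xn k \<omega> \<in> space M" using Om_X P_space[OF x] by simp
      have Jeq: "J (n - k) r y' = min (Cop (J (n - Suc k)) r y') (ennreal (g y'))" for r y'
        unfolding nk J_Suc Gop_Cop ..
      have "enat k \<le> \<tau> \<omega> \<longleftrightarrow> \<tau> \<omega> = enat k \<or> enat k < \<tau> \<omega>" by auto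
      then show "Z k \<omega> \<le> Rk s \<tau> k \<omega> + (if \<tau> \<omega> = enat k \<and> Sn k \<omega> < s then ennreal (g (Xn k \<omega>)) else 0)
              + (if enat k < \<tau> \<omega> \<and> Sn k \<omega> < s then Cop (J (n - Suc k)) (s - Sn k \<omega>) (Xn k \<omega>) else 0)"
        unfolding Z_def Jeq by (auto simp: add.assoc)
    qed
    finally show ?thesis .
  qed
  have "J n s x \<le> (\<integral>\<^sup>+ \<omega>. Z k \<omega> \<partial>P x)" if "k \<le> n" for k
    using that
  proof (induction k)
    case 0 show ?case by (rule base)
  next
    case (Suc k) then show ?case using step[of k] by (meson Suc_le_lessD less_imp_le_nat order_trans)
  qed
  moreover have "Z n = Rk s \<tau> n" by (simp add: Z_def Vn_def fun_eq_iff)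
  ultimately have "J n s x \<le> (\<integral>\<^sup>+ \<omega>. Rk s \<tau> n \<omega> \<partial>P x)" by (metis order_refl)
  also have "\<dots> \<le> Vtau P c g \<tau> s x"
    unfolding Vtau_def by (rule Rk_le_reward_AE[OF x s])
  finally show ?thesis .
qed

definition "stopc s k \<omega> \<longleftrightarrow> ennreal (g (Xn k \<omega>)) \<le> Cop Jinf (s - Sn k \<omega>) (Xn k \<omega>)"
definition "tstar s \<omega> = (if \<exists>k. stopc s k \<omega> then enat (LEAST k. stopc s k \<omega>) else \<infinity>)"

lemma stopc_meas: assumes "k \<le> n" shows "{\<omega>\<in>\<Omega>. stopc s k \<omega>} \<in> sets (Fn M n)"
proof -
  note [measurable] = Sn_meas_F[OF assms] Xn_meas_F[OF assms]
  have [measurable]: "(\<lambda>\<omega>. Cop Jinf (s - Sn k \<omega>) (Xn k \<omega>)) \<in> borel_measurable (Fn M n)"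
    by (rule u_comp[OF Cop_meas[OF Jinf_meas]]) measurable
  have "{\<omega>\<in>space (Fn M n). ennreal (g (Xn k \<omega>)) \<le> Cop Jinf (s - Sn k \<omega>) (Xn k \<omega>)} \<in> sets (Fn M n)"
    by (rule borel_measurable_le) measurable
  then show ?thesis by (simp add: stopc_def)
qed

lemma tstar_eq: "tstar s \<omega> = enat n \<longleftrightarrow> stopc s n \<omega> \<and> (\<forall>k<n. \<not> stopc s k \<omega>)"
proof
  assume a: "tstar s \<omega> = enat n"
  then have ex: "\<exists>k. stopc s k \<omega>" by (auto simp: tstar_def split: if_splits)
  then have n: "(LEAST k. stopc s k \<omega>) = n" using a by (simp add: tstar_def)
  show "stopc s n \<omega> \<and> (\<forall>k<n. \<not> stopc s k \<omega>)"
    using LeastI_ex[OF ex] not_less_Least[of _ "\<lambda>k. stopc s k \<omega>"] n by auto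
next
  assume a: "stopc s n \<omega> \<and> (\<forall>k<n. \<not> stopc s k \<omega>)"
  then have "(LEAST k. stopc s k \<omega>) = n"
    by (intro Least_equality) (auto simp: not_less[symmetric])
  then show "tstar s \<omega> = enat n" using a by (auto simp: tstar_def)
qed

lemma tstar_st: "tstar s \<in> stopping_times M"
  unfolding stopping_times_def
proof (intro CollectI allI)
  fix n
  have "{\<omega>\<in>\<Omega>. tstar s \<omega> = enat n} = {\<omega>\<in>\<Omega>. stopc s n \<omega>} - (\<Union>k\<in>{..<n}. {\<omega>\<in>\<Omega>. stopc s k \<omega>})"
    by (auto simp: tstar_eq)
  also have "\<dots> \<in> sets (Fn M n)"
    by (intro sets.Diff sets.finite_UN stopc_meas) auto
  finally show "{\<omega>\<in>\<Omega>. tstar s \<omega> = enat n} \<in> sets (Fn M n)" .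
qed

lemma tstar_gt: "enat k < tstar s \<omega> \<Longrightarrow> \<not> stopc s k \<omega>"
proof
  assume a: "enat k < tstar s \<omega>" and st: "stopc s k \<omega>"
  from st have "(LEAST k. stopc s k \<omega>) \<le> k" by (rule Least_le)
  then show False using a st by (auto simp: tstar_def split: if_splits)
qed

lemma partC:
  assumes x: "x \<in> space M" and s: "0 \<le> s"
  shows "Vtau P c g (tstar s) s x \<le> Jinf s x"
proof -
  interpret prob_space "P x" by (rule P_prob[OF x])
  let ?\<tau> = "tstar s"
  define Z where "Z k \<omega> = Rk s ?\<tau> k \<omega> + (if enat k \<le> ?\<tau> \<omega> \<and> Sn k \<omega> < s then Jinf (s - Sn k \<omega>) (Xn k \<omega>) else 0)" for k \<omega>
  have base: "(\<integral>\<^sup>+ \<omega>. Z 0 \<omega> \<partial>P x) \<le> Jinf s x"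
  proof -
    have "AE \<omega> in P x. Z 0 \<omega> \<le> Jinf s x"
      using AE_start[OF x] by (rule AE_mp) (auto intro!: AE_I2 simp: Z_def)
    then have "(\<integral>\<^sup>+ \<omega>. Z 0 \<omega> \<partial>P x) \<le> (\<integral>\<^sup>+ \<omega>. Jinf s x \<partial>P x)"
      by (rule nn_integral_mono_AE)
    then show ?thesis by (simp add: emeasure_space_1)
  qed
  have step: "(\<integral>\<^sup>+ \<omega>. Z (Suc k) \<omega> \<partial>P x) \<le> (\<integral>\<^sup>+ \<omega>. Z k \<omega> \<partial>P x)" for k
  proof -
    have "(\<integral>\<^sup>+ \<omega>. Z (Suc k) \<omega> \<partial>P x) = (\<integral>\<^sup>+ \<omega>. Rk s ?\<tau> k \<omega> + (if ?\<tau> \<omega> = enat k \<and> Sn k \<omega> < s then ennreal (g (Xn k \<omega>)) else 0)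
              + (if enat k < ?\<tau> \<omega> \<and> Sn k \<omega> < s then Cop Jinf (s - Sn k \<omega>) (Xn k \<omega>) else 0) \<partial>P x)"
      unfolding Z_def
      by (rule step_id[OF x tstar_st Jinf_meas]) (simp add: Jinf_zero)
    also have "\<dots> \<le> (\<integral>\<^sup>+ \<omega>. Z k \<omega> \<partial>P x)"
    proof (rule nn_integral_mono)
      fix \<omega> assume "\<omega> \<in> space (P x)"
      then have y: "Xn k \<omega> \<in> space M" using Om_X P_space[OF x] by simp
      have Jeq: "Jinf r (Xn k \<omega>) = min (Cop Jinf r (Xn k \<omega>)) (ennreal (g (Xn k \<omega>)))" for r
        using Jinf_fix[OF y, of r] by (simp add: Gop_Cop)
      have c1: "?\<tau> \<omega> = enat k \<Longrightarrow> stopc s k \<omega>" by (simp add: tstar_eq)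
      have c2: "enat k < ?\<tau> \<omega> \<Longrightarrow> \<not> stopc s k \<omega>" by (rule tstar_gt)
      have "enat k \<le> ?\<tau> \<omega> \<longleftrightarrow> ?\<tau> \<omega> = enat k \<or> enat k < ?\<tau> \<omega>" by auto
      then show "Rk s ?\<tau> k \<omega> + (if ?\<tau> \<omega> = enat k \<and> Sn k \<omega> < s then ennreal (g (Xn k \<omega>)) else 0)
              + (if enat k < ?\<tau> \<omega> \<and> Sn k \<omega> < s then Cop Jinf (s - Sn k \<omega>) (Xn k \<omega>) else 0) \<le> Z k \<omega>"
        unfolding Z_def Jeq using c1 c2 by (auto simp: stopc_def min_def)
    qed
    finally show ?thesis .
  qed
  have Zb: "(\<integral>\<^sup>+ \<omega>. Z k \<omega> \<partial>P x) \<le> Jinf s x" for k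
  proof (induction k)
    case 0 show ?case by (rule base)
  next
    case (Suc k) then show ?case using step[of k] by (meson order_trans)
  qed
  have Rb: "(\<integral>\<^sup>+ \<omega>. Rk s ?\<tau> k \<omega> \<partial>P x) \<le> Jinf s x" for k
    using Zb[of k] by (rule order_trans[rotated]) (intro nn_integral_mono, simp add: Z_def)
  have "Vtau P c g ?\<tau> s x = (\<integral>\<^sup>+ \<omega>. (SUP k. Rk s ?\<tau> k \<omega>) \<partial>P x)"
    unfolding Vtau_def
  proof (rule nn_integral_cong_AE)
    show "AE \<omega> in P x. reward c g s ?\<tau> \<omega> = (SUP k. Rk s ?\<tau> k \<omega>)"
      using AE_good_unb[OF x]
    proof (rule AE_mp, intro AE_I2 impI)
      fix \<omega> assume \<omega>: "\<omega> \<in> space (P x)" and gu: "good \<omega> \<and> (\<forall>r. \<exists>k. r \<le> Sn k \<omega>)"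
      then obtain m where "s \<le> Sn m \<omega>" by blast
      then show "reward c g s ?\<tau> \<omega> = (SUP k. Rk s ?\<tau> k \<omega>)"
        using Rk_sup[OF _ _ s] gu \<omega> P_space[OF x] by auto
    qed
  qed
  also have "\<dots> = (SUP k. (\<integral>\<^sup>+ \<omega>. Rk s ?\<tau> k \<omega> \<partial>P x))"
    by (rule nn_integral_monotone_convergence_SUP[OF Rk_incseq])
       (rule P_meas[OF x Fn_meas_path[OF Rk_meas[OF tstar_st]]])
  also have "\<dots> \<le> Jinf s x" by (rule SUP_least) (rule Rb)
  finally show ?thesis .
qed

lemma Vstar_eq:
  assumes x: "x \<in> space M" and s: "0 \<le> s"
  shows "Vstar M P c g s x = Jinf s x"
proof (rule antisym)
  show "Vstar M P c g s x \<le> Jinf s x"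
    unfolding Vstar_def by (rule INF_lower2[where i="tstar s"]) (simp_all add: tstar_st partC[OF x s])
  show "Jinf s x \<le> Vstar M P c g s x"
    unfolding Vstar_def Jinf_def
    by (intro INF_greatest SUP_least partA[OF x s])
qed

end

theorem theorem4p3:
  fixes E :: "'e::polish_space set" and M :: "'e measure"
    and Q :: "real \<Rightarrow> 'e set \<Rightarrow> 'e \<Rightarrow> real"
    and P :: "'e \<Rightarrow> (nat \<Rightarrow> real \<times> 'e) measure"
    and c g :: "'e \<Rightarrow> real" and T :: real
  assumes E: "E \<in> sets borel"
    and M: "M = restrict_space borel E"
    and Q: "semi_markov_kernel M Q"
    and reg: "\<exists>\<delta>>0. \<exists>\<epsilon>>0. \<forall>x\<in>space M. Q \<delta> (space M) x \<le> 1 - \<epsilon>"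
    and c: "c \<in> borel_measurable M" "\<forall>x\<in>space M. 0 \<le> c x"
    and g: "g \<in> borel_measurable M" "\<forall>x\<in>space M. 0 \<le> g x"
    and T: "0 \<le> T"
    and P: "semi_markov_laws M Q P"
  shows "(\<forall>s\<in>{0..T}. \<forall>x\<in>space M. (\<lambda>n. Vn M Q c g n s x) \<longlonglongrightarrow> Vstar M P c g s x)
       \<and> (\<forall>s\<in>{0..T}. \<forall>x\<in>space M. Vstar M P c g s x = Gop M Q c g (Vstar M P c g) s x)"
proof -
  interpret smk M Q P c g
    using Q P reg c g by unfold_locales auto
  have eq: "Vstar M P c g s x = Jinf s x" if "x \<in> space M" "0 \<le> s" for s x
    by (rule Vstar_eq[OF that])
  show ?thesis
  proof (intro conjI ballI)
    fix s x assume s: "s \<in> {0..T}" and x: "x \<in> space M"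
    then have s0: "0 \<le> s" by simp
    show "(\<lambda>n. Vn M Q c g n s x) \<longlonglongrightarrow> Vstar M P c g s x"
      unfolding eq[OF x s0] Jinf_def by (rule LIMSEQ_SUP[OF J_incseq])
  next
    fix s x assume s: "s \<in> {0..T}" and x: "x \<in> space M"
    then have s0: "0 \<le> s" by simp
    have "Gop M Q c g (Vstar M P c g) s x = Gop M Q c g Jinf s x"
      unfolding Gop_def
      by (intro arg_cong2[where f=min] arg_cong2[where f="(+)"] refl nn_integral_cong)
         (auto simp: Qmeas_space[OF x] indicator_def eq)
    then show "Vstar M P c g s x = Gop M Q c g (Vstar M P c g) s x"
      using Jinf_fix[OF x, of s] eq[OF x s0] by simp
  qed
qed

end
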